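(* Let $q$ be a prime power, $\gcd(n,q)=1$, and let $C$ be a cyclic code of length $n$ over $\mathbb{F}_{q^2}$ with parameters $[n,k,d]_{q^2}$. Then there exists a QUENTA code with parameters $$[[\,n,\;k-|Z(C^{\perp_h})\cap Z(C)|,\;d;\;n-k-|Z(C^{\perp_h})\cap Z(C)|\,]]_q .$$
   Context: For $x,y\in\mathbb{F}_{q^2}^n$ the Hermitian inner product is $\langle x,y\rangle_h=\sum_{i} x_i y_i^q$, and $C^{\perp_h}=\{x: \langle x,c\rangle_h=0\ \forall c\in C\}$ is the Hermitian dual. For a cyclic code $C$ of length $n$ over $\mathbb{F}_{q^2}$ (with $\gcd(n,q)=1$) and a fixed primitive $n$-th root of unity $\alpha$ in an extension of $\mathbb{F}_{q^2}$, the defining set is $Z(C)=\{i\in\mathbb{Z}_n: c(\alpha^i)=0\ \forall c\in C\}$; $C^{\perp_h}$ is again cyclic and $Z(C^{\perp_h})=\mathbb{Z}_n\setminus(-q\,Z(C))$. A QUENTA code (entanglement-assisted quantum error-correcting code) with parameters $[[n,k,d;c]]_q$ is a $q$-ary entanglement-assisted quantum stabilizer code that encodes $k$ logical qudits into $n$ physical qudits using $c$ pairs of maximally entangled qudits pre-shared between sender and receiver, and has minimum distance $d$. *)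

theory Defs
  imports "HOL-Computational_Algebra.Primes"
begin

definition vecs :: "nat \<Rightarrow> (nat \<Rightarrow> 'a::zero) set" where
  "vecs n = {x. \<forall>i\<ge>n. x i = 0}"

definition hweight :: "nat \<Rightarrow> (nat \<Rightarrow> 'a::zero) \<Rightarrow> nat" where
  "hweight n x = card {i. i < n \<and> x i \<noteq> 0}"

definition linear_code :: "nat \<Rightarrow> (nat \<Rightarrow> 'a::field) set \<Rightarrow> bool" where
  "linear_code n C \<longleftrightarrow> C \<subseteq> vecs n \<and> (\<lambda>_. 0) \<in> C \<and>
     (\<forall>x\<in>C. \<forall>y\<in>C. (\<lambda>i. x i + y i) \<in> C) \<and>
     (\<forall>a. \<forall>x\<in>C. (\<lambda>i. a * x i) \<in> C)"

definition cshift :: "nat \<Rightarrow> (nat \<Rightarrow> 'a::zero) \<Rightarrow> nat \<Rightarrow> 'a" where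
  "cshift n x = (\<lambda>i. if i < n then x ((i + n - 1) mod n) else 0)"

definition cyclic_code :: "nat \<Rightarrow> (nat \<Rightarrow> 'a::field) set \<Rightarrow> bool" where
  "cyclic_code n C \<longleftrightarrow> linear_code n C \<and> (\<forall>x\<in>C. cshift n x \<in> C)"

text \<open>Parameters [n,k,d] over the field 'a: dimension k (i.e. |C| = |F|^k) and
  minimum distance d (minimum Hamming weight of a nonzero codeword).\<close>

definition code_params :: "nat \<Rightarrow> nat \<Rightarrow> nat \<Rightarrow> (nat \<Rightarrow> 'a::{field,finite}) set \<Rightarrow> bool" where
  "code_params n k d C \<longleftrightarrow> linear_code n C \<and> card C = card (UNIV :: 'a set) ^ k \<and>
     (\<exists>x\<in>C. x \<noteq> (\<lambda>_. 0) \<and> hweight n x = d) \<and>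
     (\<forall>x\<in>C. x \<noteq> (\<lambda>_. 0) \<longrightarrow> d \<le> hweight n x)"

definition herm :: "nat \<Rightarrow> nat \<Rightarrow> (nat \<Rightarrow> 'a::field) \<Rightarrow> (nat \<Rightarrow> 'a) \<Rightarrow> 'a" where
  "herm q n x y = (\<Sum>i<n. x i * y i ^ q)"

definition herm_dual :: "nat \<Rightarrow> nat \<Rightarrow> (nat \<Rightarrow> 'a::field) set \<Rightarrow> (nat \<Rightarrow> 'a) set" where
  "herm_dual q n C = {x \<in> vecs n. \<forall>c\<in>C. herm q n x c = 0}"

text \<open>Defining set w.r.t. an embedding emb of 'a into an extension field 'b and
  a primitive n-th root of unity alpha in 'b: Z(C) = {i in Z_n. c(alpha^i) = 0 for all c in C}.\<close>

definition defining_set :: "('a::field \<Rightarrow> 'b::field) \<Rightarrow> 'b \<Rightarrow> nat \<Rightarrow> (nat \<Rightarrow> 'a) set \<Rightarrow> nat set" where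
  "defining_set emb \<alpha> n C =
     {i. i < n \<and> (\<forall>c\<in>C. (\<Sum>j<n. emb (c j) * (\<alpha> ^ i) ^ j) = 0)}"

definition field_embedding :: "('a::field \<Rightarrow> 'b::field) \<Rightarrow> bool" where
  "field_embedding emb \<longleftrightarrow> emb 1 = 1 \<and> (\<forall>x y. emb (x + y) = emb x + emb y) \<and>
     (\<forall>x y. emb (x * y) = emb x * emb y)"

definition primitive_root_of_unity :: "nat \<Rightarrow> 'b::field \<Rightarrow> bool" where
  "primitive_root_of_unity n \<alpha> \<longleftrightarrow> \<alpha> ^ n = 1 \<and> (\<forall>m. 0 < m \<and> m < n \<longrightarrow> \<alpha> ^ m \<noteq> 1)"

definition prime_power :: "nat \<Rightarrow> bool" where
  "prime_power q \<longleftrightarrow> (\<exists>p m. prime p \<and> 0 < m \<and> q = p ^ m)"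

text \<open>Symplectic (stabilizer) description over the field K = F_q (a subfield of 'a,
  given as a set).  A Pauli operator on n qudits, up to phase, is a vector (a|b) in F_q^{2n}.\<close>

definition svecs :: "'a::field set \<Rightarrow> nat \<Rightarrow> ((nat \<Rightarrow> 'a) \<times> (nat \<Rightarrow> 'a)) set" where
  "svecs K n = {(a, b). (\<forall>i. a i \<in> K \<and> b i \<in> K) \<and> (\<forall>i\<ge>n. a i = 0 \<and> b i = 0)}"

definition symp :: "nat \<Rightarrow> (nat \<Rightarrow> 'a::field) \<times> (nat \<Rightarrow> 'a) \<Rightarrow> (nat \<Rightarrow> 'a) \<times> (nat \<Rightarrow> 'a) \<Rightarrow> 'a" where
  "symp n v w = (\<Sum>i<n. fst v i * snd w i - fst w i * snd v i)"

definition symp_dual :: "'a::field set \<Rightarrow> nat \<Rightarrow> ((nat \<Rightarrow> 'a) \<times> (nat \<Rightarrow> 'a)) set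
    \<Rightarrow> ((nat \<Rightarrow> 'a) \<times> (nat \<Rightarrow> 'a)) set" where
  "symp_dual K n S = {v \<in> svecs K n. \<forall>s\<in>S. symp n v s = 0}"

definition sweight :: "nat \<Rightarrow> (nat \<Rightarrow> 'a::zero) \<times> (nat \<Rightarrow> 'a) \<Rightarrow> nat" where
  "sweight n v = card {i. i < n \<and> (fst v i \<noteq> 0 \<or> snd v i \<noteq> 0)}"

definition ssubspace :: "'a::field set \<Rightarrow> nat \<Rightarrow> ((nat \<Rightarrow> 'a) \<times> (nat \<Rightarrow> 'a)) set \<Rightarrow> bool" where
  "ssubspace K n S \<longleftrightarrow> S \<subseteq> svecs K n \<and> ((\<lambda>_. 0), (\<lambda>_. 0)) \<in> S \<and>
     (\<forall>v\<in>S. \<forall>w\<in>S. ((\<lambda>i. fst v i + fst w i), (\<lambda>i. snd v i + snd w i)) \<in> S) \<and>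
     (\<forall>a\<in>K. \<forall>v\<in>S. ((\<lambda>i. a * fst v i), (\<lambda>i. a * snd v i)) \<in> S)"

text \<open>An [[n,k,d;c]] QUENTA code over K: a (generally non-abelian) stabilizer group, i.e.
  a K-subspace S of K^{2n} with dim S = n-k+c whose isotropic part S \<inter> S^\<perp>
  has dimension n-k-c (so S has c symplectic pairs, c ebits, encoding k qudits);
  dimensions are expressed via cardinalities |S| = |K|^dim.  The minimum distance d is
  taken as the minimum symplectic weight of a nonzero element of the symplectic dual
  S^\<perp> (the set of undetectable errors).\<close>

definition quenta_code :: "'a::field set \<Rightarrow> nat \<Rightarrow> nat \<Rightarrow> nat \<Rightarrow> nat \<Rightarrow> bool" where
  "quenta_code K n k d c \<longleftrightarrow> k + c \<le> n \<and>
     (\<exists>S. ssubspace K n S \<and>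
        card S = card K ^ (n - k + c) \<and>
        card (S \<inter> symp_dual K n S) = card K ^ (n - k - c) \<and>
        (\<exists>v\<in>symp_dual K n S. v \<noteq> ((\<lambda>_. 0), (\<lambda>_. 0)) \<and> sweight n v = d) \<and>
        (\<forall>v\<in>symp_dual K n S. v \<noteq> ((\<lambda>_. 0), (\<lambda>_. 0)) \<longrightarrow> d \<le> sweight n v))"

end

theory Submission
  imports Defs "HOL-Computational_Algebra.Polynomial"
begin

lemma card_fibers:
  assumes "finite A" "\<And>w. w \<in> f ` A \<Longrightarrow> card {a\<in>A. f a = w} = m"
  shows "card A = m * card (f ` A)"
proof -
  have "A = (\<Union>w\<in>f ` A. {a\<in>A. f a = w})" by auto
  hence "card A = card (\<Union>w\<in>f ` A. {a\<in>A. f a = w})" by simp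
  also have "\<dots> = (\<Sum>w\<in>f ` A. card {a\<in>A. f a = w})"
    by (rule card_UN_disjoint) (use assms(1) in auto)
  also have "\<dots> = (\<Sum>w\<in>f ` A. m)" using assms(2) by simp
  finally show ?thesis by simp
qed

lemma vecs_Suc: "vecs (Suc n) = (\<lambda>(x,a). x(n := a)) ` (vecs n \<times> (UNIV :: 'a::zero set))"
proof (intro equalityI subsetI)
  fix y :: "nat \<Rightarrow> 'a" assume "y \<in> vecs (Suc n)"
  hence "y(n := 0) \<in> vecs n" "y = (y(n:=0))(n := y n)" by (auto simp: vecs_def)
  thus "y \<in> (\<lambda>(x,a). x(n := a)) ` (vecs n \<times> UNIV)" by (intro image_eqI[of _ _ "(y(n:=0), y n)"]) auto
qed (auto simp: vecs_def)

lemma inj_on_upd: "inj_on (\<lambda>(x,a). x(n := a)) (vecs n \<times> UNIV)"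
proof (rule inj_onI, clarsimp)
  fix x y :: "nat \<Rightarrow> 'a" and a b
  assume "x \<in> vecs n" "y \<in> vecs n" "x(n := a) = y(n := b)"
  moreover from this have "a = b" by (metis fun_upd_same)
  ultimately show "x = y \<and> a = b" unfolding vecs_def
    by (metis (mono_tags, lifting) fun_upd_idem_iff fun_upd_upd mem_Collect_eq order_refl)
qed

lemma card_vecs: "card (vecs n :: (nat \<Rightarrow> 'a::{zero,finite}) set) = card (UNIV :: 'a set) ^ n \<and> finite (vecs n :: (nat \<Rightarrow> 'a) set)"
proof (induction n)
  case 0
  have "vecs 0 = {(\<lambda>_. 0) :: nat \<Rightarrow> 'a}" by (auto simp: vecs_def)
  thus ?case by simp
next
  case (Suc n)
  have "card (vecs (Suc n) :: (nat \<Rightarrow> 'a) set) = card ((vecs n :: (nat \<Rightarrow> 'a) set) \<times> (UNIV :: 'a set))"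
    unfolding vecs_Suc by (rule card_image[OF inj_on_upd])
  moreover have "finite (vecs (Suc n) :: (nat \<Rightarrow> 'a) set)" unfolding vecs_Suc using Suc by simp
  ultimately show ?case using Suc by (simp add: card_cartesian_product)
qed

locale fq =
  fixes q :: nat and ty :: "'a::{field,finite} itself"
  assumes pp: "prime_power q" and cardQ: "card (UNIV :: 'a set) = q ^ 2"
begin

definition K :: "'a set" where "K = {x. x ^ q = x}"

lemma q_ge2: "q \<ge> 2"
proof -
  obtain p m where "prime p" "0 < m" "q = p ^ m" using pp unfolding prime_power_def by blast
  have "p > 0" using \<open>prime p\<close> prime_gt_0_nat by blast
  hence "p ^ 1 \<le> p ^ m" using \<open>0 < m\<close> by (intro power_increasing) auto
  hence "p \<le> q" using \<open>q = p ^ m\<close> by simp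
  moreover have "2 \<le> p" using prime_ge_2_nat[OF \<open>prime p\<close>] .
  ultimately show ?thesis by linarith
qed

lemma char_q: "prime CHAR('a) \<and> (\<exists>m. q = CHAR('a) ^ m)"
proof -
  obtain p m where p: "prime p" "0 < m" "q = p ^ m" using pp unfolding prime_power_def by blast
  have fin: "finite (UNIV :: 'a set)" by simp
  have pos: "CHAR('a) > 0" using finite_imp_CHAR_pos[OF fin] .
  have pc: "prime CHAR('a)" using prime_CHAR_semidom[OF pos] .
  have "(\<Sum>y\<in>UNIV. y) = (\<Sum>y\<in>(UNIV::'a set). y + 1)"
    by (rule sum.reindex_bij_witness[of _ "\<lambda>y. y + 1" "\<lambda>y. y - 1"]) auto
  also have "\<dots> = (\<Sum>y\<in>UNIV. y) + of_nat (card (UNIV :: 'a set))"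
    by (simp add: sum.distrib)
  finally have "of_nat (card (UNIV :: 'a set)) = (0::'a)" by simp
  hence "CHAR('a) dvd card (UNIV :: 'a set)" by (simp add: of_nat_eq_0_iff_char_dvd)
  hence "CHAR('a) dvd p ^ (m * 2)" using p cardQ by (simp add: power_mult)
  hence "CHAR('a) dvd p" using pc prime_dvd_power by blast
  hence "CHAR('a) = p" using pc p(1) primes_dvd_imp_eq by blast
  thus ?thesis using pc p by blast
qed

lemma frob_add: "(x + y :: 'a) ^ q = x ^ q + y ^ q"
proof -
  obtain m where "q = CHAR('a) ^ m" using char_q by blast
  thus ?thesis using char_q freshmans_dream'[of q m x y] by simp
qed

lemma frob_sum: "(sum f A :: 'a) ^ q = sum (\<lambda>i. f i ^ q) A"
proof -
  obtain m where "q = CHAR('a) ^ m" using char_q by blast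
  thus ?thesis using char_q freshmans_dream_sum'[of q m f A] by simp
qed

lemma frob_neg: "(- x :: 'a) ^ q = - (x ^ q)"
proof -
  have "(x + - x) ^ q = x ^ q + (- x) ^ q" by (rule frob_add)
  moreover have "(0::'a) ^ q = 0" using q_ge2 by (simp add: power_0_left)
  ultimately have "0 = x ^ q + (- x) ^ q" by simp
  thus ?thesis by (simp add: eq_neg_iff_add_eq_0 add.commute)
qed

lemma frob_diff: "(x - y :: 'a) ^ q = x ^ q - y ^ q"
  using frob_add[of x "- y"] frob_neg[of y] by simp

lemma pow_card: "(x :: 'a) ^ card (UNIV :: 'a set) = x"
proof (cases "x = 0")
  case False
  have "x * (\<Prod>y\<in>UNIV-{0}. x * y) = x * x ^ (card (UNIV :: 'a set) - 1) * \<Prod>(UNIV-{0})"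
    by (simp add: prod.distrib mult_ac)
  also have "x * x ^ (card (UNIV :: 'a set) - 1) = x ^ Suc (card (UNIV :: 'a set) - 1)"
    by (subst power_Suc) auto
  also have "Suc (card (UNIV :: 'a set) - 1) = card (UNIV :: 'a set)"
    using finite_UNIV_card_ge_0[where ?'a = 'a] by simp
  also have "(\<Prod>y\<in>UNIV-{0}. x * y) = (\<Prod>y\<in>UNIV-{0}. y)"
    by (rule prod.reindex_bij_witness[of _ "\<lambda>y. y / x" "\<lambda>y. x * y"]) (use False in auto)
  finally show ?thesis
    by simp
qed (use finite_UNIV_card_ge_0[where ?'a = 'a] in auto)

lemma frob_frob: "((x :: 'a) ^ q) ^ q = x"
proof -
  have "(x ^ q) ^ q = x ^ (q * q)" by (simp add: power_mult)
  also have "q * q = card (UNIV :: 'a set)" using cardQ by (simp add: power2_eq_square)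
  finally show ?thesis using pow_card by simp
qed

lemma frob_inj: "(x :: 'a) ^ q = y ^ q \<longleftrightarrow> x = y"
  by (metis frob_frob)

lemma frob_mult: "(x * y :: 'a) ^ q = x ^ q * y ^ q"
  by (simp add: power_mult_distrib)

lemma frob_one: "(1::'a) ^ q = 1" by simp

lemma frob_zero: "(0::'a) ^ q = 0" using q_ge2 by simp

lemma frob_inverse: "(inverse x :: 'a) ^ q = inverse (x ^ q)"
  by (simp add: power_inverse)

lemma card_roots_frob:
  fixes c :: 'a
  shows "card {x :: 'a. x ^ q + c * x = 0} \<le> q"
proof -
  define P :: "'a poly" where "P = Polynomial.monom 1 q + [:0, c:]"
  have ev: "poly P x = x ^ q + c * x" for x by (simp add: P_def poly_monom)
  have "coeff P q = 1" using q_ge2 by (simp add: P_def coeff_pCons split: nat.split)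
  hence "P \<noteq> 0" by auto
  have "degree P \<le> q" unfolding P_def
  proof (rule degree_add_le)
    show "degree (Polynomial.monom (1::'a) q) \<le> q" by (rule degree_monom_le)
    have "degree [:0, c:] \<le> 1" by (simp add: degree_pCons_le)
    thus "degree [:0, c:] \<le> q" using q_ge2 by linarith
  qed
  have "card {x. poly P x = 0} \<le> degree P" by (rule card_poly_roots_bound[OF \<open>P \<noteq> 0\<close>])
  thus ?thesis using \<open>degree P \<le> q\<close> by (simp add: ev)
qed

end

context fq
begin

definition K' :: "'a set" where "K' = {y. y ^ q + 1 * y = 0}"

lemma K_alt: "K = {x. x ^ q + (-1) * x = 0}"
  unfolding K_def by (auto simp: algebra_simps)

lemma nat_sq_aux:
  fixes a b c :: nat
  assumes "a \<le> c" "b \<le> c" "a * b = c * c"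
  shows "a = c \<and> b = c"
proof (cases "c = 0")
  case True thus ?thesis using assms by simp
next
  case False
  hence c0: "c > 0" by simp
  show ?thesis
  proof (rule ccontr)
    assume "\<not> (a = c \<and> b = c)"
    hence "a < c \<or> b < c" using assms by linarith
    hence "a * b < c * c"
    proof
      assume "a < c"
      have "a * b \<le> a * c" using assms(2) by (rule mult_le_mono2)
      also have "a * c < c * c" using \<open>a < c\<close> c0 by (intro mult_strict_right_mono) auto
      finally show ?thesis .
    next
      assume "b < c"
      have "a * b \<le> c * b" using assms(1) by (rule mult_le_mono1)
      also have "c * b < c * c" using \<open>b < c\<close> c0 by (intro mult_strict_left_mono) auto
      finally show ?thesis .
    qed
    thus False using assms by simp
  qed
qed

lemma K_card_all: "card K = q \<and> card K' = q \<and> range (\<lambda>x::'a. x ^ q - x) = K'"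
proof -
  let ?L = "\<lambda>x::'a. x ^ q - x"
  have fib: "card {x\<in>UNIV. ?L x = w} = card K" if "w \<in> range ?L" for w
  proof -
    obtain a where a: "w = ?L a" using \<open>w \<in> range ?L\<close> by blast
    have "{x\<in>UNIV. ?L x = w} = (\<lambda>k. k + a) ` K"
    proof (intro equalityI subsetI)
      fix x assume "x \<in> {x\<in>UNIV. ?L x = w}"
      hence "x ^ q - x = a ^ q - a" using a by simp
      hence "(x - a) ^ q = x - a" by (simp add: frob_diff algebra_simps)
      hence "x - a \<in> K" by (simp add: K_def)
      thus "x \<in> (\<lambda>k. k + a) ` K" by (intro image_eqI[of _ _ "x - a"]) auto
    next
      fix x assume "x \<in> (\<lambda>k. k + a) ` K"
      then obtain k where "k \<in> K" "x = k + a" by blast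
      hence "x ^ q - x = a ^ q - a" by (simp add: frob_add K_def)
      thus "x \<in> {x\<in>UNIV. ?L x = w}" using a by simp
    qed
    moreover have "inj_on (\<lambda>k. k + a) K" by (rule inj_onI) simp
    ultimately show ?thesis by (simp add: card_image)
  qed
  have c1: "card (UNIV :: 'a set) = card K * card (range ?L)"
    by (rule card_fibers) (use fib in auto)
  have sub: "range ?L \<subseteq> K'"
  proof
    fix y assume "y \<in> range ?L"
    then obtain x where "y = x ^ q - x" by blast
    thus "y \<in> K'" by (simp add: K'_def frob_diff frob_frob)
  qed
  have b1: "card K \<le> q" unfolding K_alt by (rule card_roots_frob)
  have b2: "card K' \<le> q" unfolding K'_def by (rule card_roots_frob)
  have b3: "card (range ?L) \<le> card K'" using sub by (intro card_mono) auto
  have "card K * card (range ?L) = q * q" using c1 cardQ by (simp add: power2_eq_square)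
  hence e: "card K = q \<and> card (range ?L) = q" using b1 b2 b3 by (intro nat_sq_aux) auto
  hence "card K' = q" using b2 b3 by simp
  moreover have "range ?L = K'" using sub e \<open>card K' = q\<close> by (intro card_subset_eq) auto
  ultimately show ?thesis using e by simp
qed

lemma card_K: "card K = q" using K_card_all by simp

lemma K_mem: "x \<in> K \<longleftrightarrow> x ^ q = x" by (simp add: K_def)

lemma exists_theta: "\<exists>\<theta>::'a. \<theta> \<noteq> 0 \<and> \<theta> ^ q = - \<theta>"
proof -
  have "card K' = q" using K_card_all by simp
  hence "card K' \<ge> 2" using q_ge2 by simp
  moreover have "K' \<subseteq> {0} \<Longrightarrow> card K' \<le> 1"
    using card_mono[of "{0::'a}" K'] by simp
  ultimately have "\<not> K' \<subseteq> {0}" by linarith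
  then obtain t where "t \<in> K'" "t \<noteq> 0" by blast
  hence "t ^ q = - t" by (simp add: K'_def eq_neg_iff_add_eq_0)
  thus ?thesis using \<open>t \<noteq> 0\<close> by blast
qed

lemma exists_w0: "\<exists>w::'a. w ^ q \<noteq> w"
proof (rule ccontr)
  assume "\<not> ?thesis"
  hence "K = UNIV" by (auto simp: K_def)
  hence "q = q ^ 2" using card_K cardQ by simp
  moreover have "q * 1 < q * q" using q_ge2 by (intro mult_strict_left_mono) auto
  ultimately show False by (simp add: power2_eq_square)
qed

end

locale fq2 = fq q ty for q :: nat and ty :: "'a::{field,finite} itself" +
  fixes \<theta> :: 'a and w0 :: 'a
  assumes th0: "\<theta> \<noteq> 0" and thq: "\<theta> ^ q = - \<theta>" and w0q: "w0 ^ q \<noteq> w0"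
begin

definition B :: "'a \<Rightarrow> 'a \<Rightarrow> 'a" where "B u v = \<theta> * (u * v ^ q - u ^ q * v)"
definition e2 :: 'a where "e2 = inverse (B w0 1)"
definition fa :: "'a \<Rightarrow> 'a" where "fa z = B z e2"
definition fb :: "'a \<Rightarrow> 'a" where "fb z = B w0 z"

lemma B_K: "(B u v) ^ q = B u v"
  unfolding B_def by (simp add: frob_mult frob_diff frob_frob thq algebra_simps)

lemma beta_nz: "B w0 1 \<noteq> 0"
  unfolding B_def using th0 w0q by simp

lemma e2q: "e2 ^ q = e2"
  unfolding e2_def by (simp add: frob_inverse B_K)

lemma B_lin:
  assumes "a1 ^ q = a1" "b1 ^ q = b1" "a2 ^ q = a2" "b2 ^ q = b2"
  shows "B (a1 * u + b1 * v) (a2 * u + b2 * v) = (a1 * b2 - b1 * a2) * B u v"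
proof -
  have p1: "(a1 * u + b1 * v) ^ q = a1 * u ^ q + b1 * v ^ q" using assms by (simp add: frob_add frob_mult)
  have p2: "(a2 * u + b2 * v) ^ q = a2 * u ^ q + b2 * v ^ q" using assms by (simp add: frob_add frob_mult)
  show ?thesis unfolding B_def p1 p2 by (simp add: algebra_simps)
qed

lemma B_e12: "B w0 e2 = 1"
proof -
  have "B w0 e2 = e2 * B w0 1" unfolding B_def using e2q by (simp add: algebra_simps)
  thus ?thesis unfolding e2_def using beta_nz by simp
qed

lemma fa_comb: assumes "a ^ q = a" "b ^ q = b" shows "fa (a * w0 + b * e2) = a"
proof -
  have "fa (a * w0 + b * e2) = B (a * w0 + b * e2) (0 * w0 + 1 * e2)" by (simp add: fa_def)
  also have "\<dots> = a" using B_lin[of a b 0 1 w0 e2] assms B_e12 frob_zero by simp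
  finally show ?thesis .
qed

lemma fb_comb: assumes "a ^ q = a" "b ^ q = b" shows "fb (a * w0 + b * e2) = b"
proof -
  have "fb (a * w0 + b * e2) = B (1 * w0 + 0 * e2) (a * w0 + b * e2)" by (simp add: fb_def)
  also have "\<dots> = b" using B_lin[of 1 0 a b w0 e2] assms B_e12 frob_zero by simp
  finally show ?thesis .
qed

lemma fa_K: "fa z ^ q = fa z" unfolding fa_def by (rule B_K)
lemma fb_K: "fb z ^ q = fb z" unfolding fb_def by (rule B_K)

lemma decomp: "z = fa z * w0 + fb z * e2"
proof -
  let ?h = "\<lambda>(a, b). a * w0 + b * e2"
  have inj: "inj_on ?h (K \<times> K)"
  proof (rule inj_onI)
    fix p p' assume pK: "p \<in> K \<times> K" and p'K: "p' \<in> K \<times> K" and eq: "?h p = ?h p'"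
    obtain a b where pab: "p = (a, b)" by (cases p)
    obtain a' b' where pab': "p' = (a', b')" by (cases p')
    have K4: "a ^ q = a" "b ^ q = b" "a' ^ q = a'" "b' ^ q = b'" using pK p'K pab pab' by (auto simp: K_def)
    have "fa (a * w0 + b * e2) = fa (a' * w0 + b' * e2)" "fb (a * w0 + b * e2) = fb (a' * w0 + b' * e2)"
      using eq pab pab' by simp_all
    hence "a = a'" "b = b'" using fa_comb fb_comb K4 by simp_all
    thus "p = p'" using pab pab' by simp
  qed
  have "card (?h ` (K \<times> K)) = q * q" using card_image[OF inj] card_K by (simp add: card_cartesian_product)
  hence "card (?h ` (K \<times> K)) = card (UNIV :: 'a set)" using cardQ by (simp add: power2_eq_square)
  hence "?h ` (K \<times> K) = UNIV" by (intro card_subset_eq) simp_all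
  hence "z \<in> ?h ` (K \<times> K)" by simp
  then obtain p where p: "p \<in> K \<times> K" "z = ?h p" by (rule imageE)
  obtain a b where pab: "p = (a, b)" by (cases p)
  have aK: "a ^ q = a" "b ^ q = b" using p(1) pab by (simp_all add: K_def)
  have zab: "z = a * w0 + b * e2" using p(2) pab by simp
  have "fa (a * w0 + b * e2) = a" "fb (a * w0 + b * e2) = b" using fa_comb fb_comb aK by simp_all
  thus ?thesis using zab by simp
qed

lemma B_sympl: "B z1 z2 = fa z1 * fb z2 - fa z2 * fb z1"
proof -
  have "B z1 z2 = B (fa z1 * w0 + fb z1 * e2) (fa z2 * w0 + fb z2 * e2)"
    by (rule arg_cong2[OF decomp decomp])
  also have "\<dots> = (fa z1 * fb z2 - fb z1 * fa z2) * B w0 e2"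
    by (rule B_lin) (simp_all add: fa_K fb_K)
  finally show ?thesis using B_e12 by (simp add: algebra_simps)
qed

lemma B_add1: "B (u + u') v = B u v + B u' v"
  unfolding B_def by (simp add: frob_add algebra_simps)
lemma B_add2: "B u (v + v') = B u v + B u v'"
  unfolding B_def by (simp add: frob_add algebra_simps)

lemma fa_add: "fa (u + v) = fa u + fa v" unfolding fa_def by (rule B_add1)
lemma fb_add: "fb (u + v) = fb u + fb v" unfolding fb_def by (rule B_add2)

lemma fa_smult: "c ^ q = c \<Longrightarrow> fa (c * z) = c * fa z"
  unfolding fa_def B_def by (simp add: frob_mult algebra_simps)
lemma fb_smult: "c ^ q = c \<Longrightarrow> fb (c * z) = c * fb z"
  unfolding fb_def B_def by (simp add: frob_mult algebra_simps)

lemma fa_0 [simp]: "fa 0 = 0" unfolding fa_def B_def using frob_zero by simp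
lemma fb_0 [simp]: "fb 0 = 0" unfolding fb_def B_def using frob_zero by simp

lemma fab_zero_iff: "(fa z = 0 \<and> fb z = 0) \<longleftrightarrow> z = 0"
proof
  assume A: "fa z = 0 \<and> fb z = 0"
  have "fa z * w0 + fb z * e2 = 0" using A by simp
  with decomp[of z] show "z = 0" by (rule trans)
qed simp

lemma B_sum: "(\<Sum>i<n. B (x i) (y i)) = \<theta> * (herm q n x y - (herm q n x y) ^ q)"
proof -
  have "(herm q n x y) ^ q = (\<Sum>i<n. (x i * y i ^ q) ^ q)" unfolding herm_def by (rule frob_sum)
  also have "\<dots> = (\<Sum>i<n. x i ^ q * y i)" by (simp add: frob_mult frob_frob)
  finally have h: "(herm q n x y) ^ q = (\<Sum>i<n. x i ^ q * y i)" .
  show ?thesis unfolding h unfolding herm_def B_def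
    by (simp add: sum_distrib_left sum_subtractf algebra_simps)
qed

lemma B_nonzero: "\<theta> * (w0 - w0 ^ q) \<noteq> 0" using th0 w0q by simp

end

lemma card_kernel_surj:
  fixes f :: "(nat \<Rightarrow> 'v::ab_group_add) \<Rightarrow> 'w::ab_group_add"
  assumes fin: "finite A"
    and addA: "\<And>a b. a \<in> A \<Longrightarrow> b \<in> A \<Longrightarrow> (\<lambda>i. a i + b i) \<in> A"
    and subA: "\<And>a b. a \<in> A \<Longrightarrow> b \<in> A \<Longrightarrow> (\<lambda>i. a i - b i) \<in> A"
    and fsub: "\<And>a b. a \<in> A \<Longrightarrow> b \<in> A \<Longrightarrow> f (\<lambda>i. a i - b i) = f a - f b"
    and surj: "f ` A = UNIV"
  shows "card A = card {a\<in>A. f a = 0} * card (UNIV :: 'w set)"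
proof -
  have "card A = card {a\<in>A. f a = 0} * card (f ` A)"
  proof (rule card_fibers[OF fin])
    fix w assume "w \<in> f ` A"
    then obtain a0 where a0: "a0 \<in> A" "w = f a0" by blast
    have "{a\<in>A. f a = w} = (\<lambda>k i. k i + a0 i) ` {k\<in>A. f k = 0}"
    proof (intro equalityI subsetI)
      fix a assume "a \<in> {a\<in>A. f a = w}"
      hence a: "a \<in> A" "f a = w" by auto
      have "(\<lambda>i. a i - a0 i) \<in> {k\<in>A. f k = 0}" using subA[OF a(1) a0(1)] fsub[OF a(1) a0(1)] a a0 by simp
      thus "a \<in> (\<lambda>k i. k i + a0 i) ` {k\<in>A. f k = 0}" by (intro image_eqI[where x = "\<lambda>i. a i - a0 i"]) simp_all
    next
      fix a assume "a \<in> (\<lambda>k i. k i + a0 i) ` {k\<in>A. f k = 0}"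
      then obtain k where k: "k \<in> A" "f k = 0" "a = (\<lambda>i. k i + a0 i)" by blast
      have aA: "a \<in> A" using addA[OF k(1) a0(1)] k(3) by simp
      have "f (\<lambda>i. a i - a0 i) = f a - f a0" by (rule fsub[OF aA a0(1)])
      moreover have "(\<lambda>i. a i - a0 i) = k" using k(3) by simp
      ultimately have "f a = w" using k(2) a0(2) by simp
      thus "a \<in> {a\<in>A. f a = w}" using aA by simp
    qed
    moreover have "inj_on (\<lambda>k i. k i + a0 i) {k\<in>A. f k = 0}"
    proof (rule inj_onI)
      fix x y :: "nat \<Rightarrow> 'v" assume "(\<lambda>i. x i + a0 i) = (\<lambda>i. y i + a0 i)"
      hence "\<And>i. x i + a0 i = y i + a0 i" by meson
      thus "x = y" by auto
    qed
    ultimately show "card {a\<in>A. f a = w} = card {a\<in>A. f a = 0}" by (simp add: card_image)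
  qed
  thus ?thesis using surj by simp
qed

lemma linear_code_add:
  assumes "linear_code n C" "a \<in> C" "b \<in> C"
  shows "(\<lambda>i. a i + b i) \<in> C"
proof -
  have "\<forall>x\<in>C. \<forall>y\<in>C. (\<lambda>i. x i + y i) \<in> C" using assms(1) unfolding linear_code_def by (elim conjE)
  thus ?thesis using assms(2,3) by simp
qed

lemma linear_code_smult:
  assumes "linear_code n C" "a \<in> C"
  shows "(\<lambda>i. c * a i) \<in> C"
proof -
  have "\<forall>c. \<forall>x\<in>C. (\<lambda>i. c * x i) \<in> C" using assms(1) unfolding linear_code_def by (elim conjE)
  thus ?thesis using assms(2) by simp
qed

lemma linear_code_sub:
  assumes "linear_code n C" "a \<in> C" "b \<in> C"
  shows "(\<lambda>i. a i - b i) \<in> C"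
proof -
  have "(\<lambda>i. (-1) * b i) \<in> C" using linear_code_smult[OF assms(1,3)] .
  hence "(\<lambda>i. a i + (\<lambda>i. (-1) * b i) i) \<in> C" by (rule linear_code_add[OF assms(1,2)])
  thus ?thesis by simp
qed

lemma linear_code_zero:
  assumes "linear_code n C" shows "(\<lambda>_. 0) \<in> C"
  using assms unfolding linear_code_def by (elim conjE)

lemma linear_code_vecs:
  assumes "linear_code n C" shows "C \<subseteq> vecs n"
  using assms unfolding linear_code_def by (elim conjE)

lemma finite_vecs: "finite (vecs n :: (nat \<Rightarrow> 'a::{zero,finite}) set)"
  using card_vecs by (rule conjunct2)

lemma card_vecs': "card (vecs n :: (nat \<Rightarrow> 'a::{zero,finite}) set) = card (UNIV :: 'a set) ^ n"
  using card_vecs by (rule conjunct1)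

lemma linear_code_finite:
  assumes "linear_code n (C :: (nat \<Rightarrow> 'a::{field,finite}) set)" shows "finite C"
  using finite_vecs linear_code_vecs[OF assms] by (rule finite_subset[rotated])

lemma vecs_add: "(a :: nat \<Rightarrow> 'a::field) \<in> vecs n \<Longrightarrow> b \<in> vecs n \<Longrightarrow> (\<lambda>i. a i + b i) \<in> vecs n"
  by (simp add: vecs_def)
lemma vecs_sub: "(a :: nat \<Rightarrow> 'a::field) \<in> vecs n \<Longrightarrow> b \<in> vecs n \<Longrightarrow> (\<lambda>i. a i - b i) \<in> vecs n"
  by (simp add: vecs_def)
lemma vecs_smult: "(a :: nat \<Rightarrow> 'a::field) \<in> vecs n \<Longrightarrow> (\<lambda>i. c * a i) \<in> vecs n"
  by (simp add: vecs_def)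

context fq
begin

lemma herm_sub1: "herm q n (\<lambda>i. a i - b i) (c::nat\<Rightarrow>'a) = herm q n a c - herm q n b c"
  unfolding herm_def by (simp add: algebra_simps sum_subtractf)

lemma herm_add1: "herm q n (\<lambda>i. a i + b i) (c::nat\<Rightarrow>'a) = herm q n a c + herm q n b c"
  unfolding herm_def by (simp add: algebra_simps sum.distrib)

lemma herm_smult1: "herm q n (\<lambda>i. s * a i) (c::nat\<Rightarrow>'a) = s * herm q n a c"
  unfolding herm_def by (simp add: algebra_simps sum_distrib_left)

lemma herm_sub2: "herm q n (x::nat\<Rightarrow>'a) (\<lambda>i. a i - b i) = herm q n x a - herm q n x b"
  unfolding herm_def by (simp add: frob_diff algebra_simps sum_subtractf)

lemma herm_smult2: "herm q n (x::nat\<Rightarrow>'a) (\<lambda>i. s * a i) = s ^ q * herm q n x a"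
  unfolding herm_def by (simp add: frob_mult algebra_simps sum_distrib_left)

lemma herm_zero2: "herm q n (x::nat\<Rightarrow>'a) (\<lambda>_. 0) = 0"
  unfolding herm_def by (simp add: frob_zero)

lemma herm_swap: "herm q n (y::nat\<Rightarrow>'a) x = (herm q n x y) ^ q"
proof -
  have "(herm q n x y) ^ q = (\<Sum>i<n. (x i * y i ^ q) ^ q)" unfolding herm_def by (rule frob_sum)
  also have "\<dots> = (\<Sum>i<n. y i * x i ^ q)" by (simp add: frob_mult frob_frob mult.commute)
  finally show ?thesis unfolding herm_def by simp
qed

lemma herm_dual_linear: "linear_code n (herm_dual q n (C :: (nat\<Rightarrow>'a) set))"
  unfolding linear_code_def herm_dual_def
proof (intro conjI ballI allI)
  show "(\<lambda>_. 0) \<in> {x \<in> vecs n. \<forall>c\<in>C. herm q n x c = 0}"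
    by (simp add: vecs_def herm_def)
qed (auto simp: vecs_def herm_add1 herm_smult1)

lemma surj_herm1:
  assumes c: "(c::nat\<Rightarrow>'a) \<in> vecs n" "c \<noteq> (\<lambda>_. 0)"
  shows "(\<lambda>x. herm q n x c) ` vecs n = UNIV"
proof -
  obtain j where j: "c j \<noteq> 0" using c(2) by auto
  have "j < n"
  proof (rule ccontr)
    assume "\<not> j < n"
    hence "c j = 0" using c(1) unfolding vecs_def by simp
    thus False using j by simp
  qed
  have cq: "c j ^ q \<noteq> 0" using j by simp
  show ?thesis
  proof (intro set_eqI iffI)
    fix w :: 'a
    let ?x = "\<lambda>i. if i = j then w / c j ^ q else 0"
    have "?x \<in> vecs n" using \<open>j < n\<close> by (simp add: vecs_def)
    moreover have "herm q n ?x c = w"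
    proof -
      have "herm q n ?x c = (\<Sum>i<n. if i = j then w / c j ^ q * c j ^ q else 0)"
        unfolding herm_def by (intro sum.cong) auto
      also have "\<dots> = w / c j ^ q * c j ^ q" using \<open>j < n\<close> by simp
      also have "\<dots> = w" using cq by simp
      finally show ?thesis .
    qed
    ultimately show "w \<in> (\<lambda>x. herm q n x c) ` vecs n" by (metis image_eqI)
  qed simp
qed

lemma surj_herm2:
  assumes C: "linear_code n (C :: (nat\<Rightarrow>'a) set)" and c0: "c0 \<in> C" and h: "herm q n x c0 \<noteq> 0"
  shows "(\<lambda>c. herm q n x c) ` C = UNIV"
proof (intro set_eqI iffI)
  fix w :: 'a
  let ?h = "herm q n x c0"
  let ?l = "(w / ?h) ^ q"
  have "(\<lambda>i. ?l * c0 i) \<in> C" by (rule linear_code_smult[OF C c0])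
  moreover have "herm q n x (\<lambda>i. ?l * c0 i) = w"
    unfolding herm_smult2 using h by (simp add: frob_frob)
  ultimately show "w \<in> (\<lambda>c. herm q n x c) ` C" by (metis image_eqI)
qed simp

lemma card_UNIV_gt1: "card (UNIV :: 'a set) > 1"
proof -
  have "(2::nat) ^ 2 \<le> q ^ 2" using q_ge2 by (rule power_mono) simp
  thus ?thesis using cardQ by simp
qed

end

lemma card_filter_sum: "finite A \<Longrightarrow> card {x\<in>A. P x} = (\<Sum>x\<in>A. if P x then 1 else 0)"
  using sum.inter_filter[of A "\<lambda>_. (1::nat)" P] by simp

context fq
begin

lemma herm_dual_card:
  assumes C: "linear_code n (C :: (nat \<Rightarrow> 'a) set)"
  shows "card (herm_dual q n C) * card C = card (UNIV :: 'a set) ^ n"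
proof -
  define V where "V = (vecs n :: (nat \<Rightarrow> 'a) set)"
  define D where "D = herm_dual q n C"
  define Q where "Q = card (UNIV :: 'a set)"
  have finV: "finite V" unfolding V_def by (rule finite_vecs)
  have finC: "finite C" by (rule linear_code_finite[OF C])
  have DV: "D \<subseteq> V" unfolding D_def V_def herm_dual_def by auto
  have finD: "finite D" using finV DV finite_subset by auto
  have CV: "C \<subseteq> V" unfolding V_def by (rule linear_code_vecs[OF C])
  have z: "(\<lambda>_. 0) \<in> C" by (rule linear_code_zero[OF C])
  have cardV: "card V = Q ^ n" unfolding V_def Q_def by (rule card_vecs')
  have swap: "(\<Sum>c\<in>C. card {x\<in>V. herm q n x c = 0}) = (\<Sum>x\<in>V. card {c\<in>C. herm q n x c = 0})"
  proof -
    have "(\<Sum>c\<in>C. card {x\<in>V. herm q n x c = 0}) = (\<Sum>c\<in>C. \<Sum>x\<in>V. if herm q n x c = 0 then 1 else 0)"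
      using finV by (simp add: card_filter_sum)
    also have "\<dots> = (\<Sum>x\<in>V. \<Sum>c\<in>C. if herm q n x c = 0 then 1 else 0)" by (rule sum.swap)
    also have "\<dots> = (\<Sum>x\<in>V. card {c\<in>C. herm q n x c = 0})"
      using finC by (simp add: card_filter_sum)
    finally show ?thesis .
  qed
  have cnz: "Q * card {x\<in>V. herm q n x c = 0} = Q ^ n" if "c \<in> C - {\<lambda>_. 0}" for c
  proof -
    have cV: "c \<in> vecs n" "c \<noteq> (\<lambda>_. 0)" using that CV V_def by auto
    have "card V = card {x\<in>V. herm q n x c = 0} * Q" unfolding Q_def
    proof (rule card_kernel_surj[OF finV])
      show "(\<lambda>x. herm q n x c) ` V = UNIV" unfolding V_def by (rule surj_herm1[OF cV])
    qed (auto simp: V_def vecs_add vecs_sub herm_sub1)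
    thus ?thesis using cardV by simp
  qed
  have c0: "{x\<in>V. herm q n x (\<lambda>_. 0) = 0} = V" by (simp add: herm_zero2)
  have cside: "Q * (\<Sum>c\<in>C. card {x\<in>V. herm q n x c = 0}) = Q * Q ^ n + (card C - 1) * Q ^ n"
  proof -
    have "(\<Sum>c\<in>C. card {x\<in>V. herm q n x c = 0}) =
          card {x\<in>V. herm q n x (\<lambda>_. 0) = 0} + (\<Sum>c\<in>C - {\<lambda>_. 0}. card {x\<in>V. herm q n x c = 0})"
      using sum.remove[OF finC z] by simp
    hence "Q * (\<Sum>c\<in>C. card {x\<in>V. herm q n x c = 0}) =
          Q * card V + (\<Sum>c\<in>C - {\<lambda>_. 0}. Q * card {x\<in>V. herm q n x c = 0})"
      using c0 by (simp add: algebra_simps sum_distrib_left)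
    also have "(\<Sum>c\<in>C - {\<lambda>_. 0}. Q * card {x\<in>V. herm q n x c = 0}) = (\<Sum>c\<in>C - {\<lambda>_. 0}. Q ^ n)"
      using cnz by (rule sum.cong[OF refl])
    also have "\<dots> = (card C - 1) * Q ^ n" using finC z by simp
    finally show ?thesis using cardV by simp
  qed
  have xD: "{c\<in>C. herm q n x c = 0} = C" if "x \<in> D" for x
    using that unfolding D_def herm_dual_def by auto
  have xnD: "Q * card {c\<in>C. herm q n x c = 0} = card C" if "x \<in> V - D" for x
  proof -
    have "x \<in> vecs n" "x \<notin> herm_dual q n C" using that V_def D_def by auto
    hence "\<not> (\<forall>c\<in>C. herm q n x c = 0)" unfolding herm_dual_def by simp
    then obtain c0 where c0: "c0 \<in> C" "herm q n x c0 \<noteq> 0" by blast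
    have "card C = card {c\<in>C. herm q n x c = 0} * Q" unfolding Q_def
    proof (rule card_kernel_surj[OF finC])
      show "(\<lambda>c. herm q n x c) ` C = UNIV" by (rule surj_herm2[OF C c0])
    qed (auto simp: linear_code_add[OF C] linear_code_sub[OF C] herm_sub2)
    thus ?thesis by simp
  qed
  have xside: "Q * (\<Sum>x\<in>V. card {c\<in>C. herm q n x c = 0}) = Q * card D * card C + (Q ^ n - card D) * card C"
  proof -
    have "(\<Sum>x\<in>V. card {c\<in>C. herm q n x c = 0}) =
          (\<Sum>x\<in>V - D. card {c\<in>C. herm q n x c = 0}) + (\<Sum>x\<in>D. card {c\<in>C. herm q n x c = 0})"
      by (rule sum.subset_diff[OF DV finV])
    hence "Q * (\<Sum>x\<in>V. card {c\<in>C. herm q n x c = 0}) =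
          (\<Sum>x\<in>V - D. Q * card {c\<in>C. herm q n x c = 0}) + Q * (\<Sum>x\<in>D. card {c\<in>C. herm q n x c = 0})"
      by (simp add: algebra_simps sum_distrib_left)
    also have "(\<Sum>x\<in>V - D. Q * card {c\<in>C. herm q n x c = 0}) = (\<Sum>x\<in>V - D. card C)"
      using xnD by (rule sum.cong[OF refl])
    also have "(\<Sum>x\<in>D. card {c\<in>C. herm q n x c = 0}) = (\<Sum>x\<in>D. card C)"
      using xD by simp
    also have "card (V - D) = Q ^ n - card D" using DV finD cardV by (simp add: card_Diff_subset)
    ultimately show ?thesis by (simp add: algebra_simps)
  qed
  have Q1: "Q > 1" unfolding Q_def by (rule card_UNIV_gt1)
  have C1: "card C \<ge> 1" using finC z by (metis card_0_eq empty_iff less_one not_le)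
  have DQ: "card D \<le> Q ^ n" using DV finV cardV card_mono by metis
  have eq: "Q * Q ^ n + (card C - 1) * Q ^ n = Q * card D * card C + (Q ^ n - card D) * card C"
    using cside xside swap by simp
  define s where "s = card C"
  define t where "t = card D"
  define N where "N = Q ^ n"
  have e1: "Q * N + (s - 1) * N = Q * t * s + (N - t) * s" using eq by (simp add: s_def t_def N_def)
  have s1: "1 \<le> s" using C1 s_def by simp
  have tN: "t \<le> N" using DQ t_def N_def by simp
  have "int (Q * N + (s - 1) * N) = int (Q * t * s + (N - t) * s)" using e1 by (rule arg_cong)
  hence eq': "int Q * int N + (int s - 1) * int N = int Q * int t * int s + (int N - int t) * int s"
    using s1 tN by (simp only: of_nat_add of_nat_mult of_nat_diff of_nat_1)
  hence "(int Q - 1) * int N = (int Q - 1) * (int t * int s)" by (simp add: algebra_simps)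
  hence "int N = int t * int s" using Q1 by simp
  hence "N = t * s" by (simp flip: of_nat_mult)
  thus ?thesis unfolding N_def t_def s_def D_def Q_def by simp
qed

end

definition vp :: "nat \<Rightarrow> (nat \<Rightarrow> 'a::comm_monoid_add) \<Rightarrow> 'a poly" where
  "vp n c = (\<Sum>j<n. Polynomial.monom (c j) j)"

definition PD :: "nat \<Rightarrow> 'a::zero poly set" where
  "PD m = {p. \<forall>i\<ge>m. coeff p i = 0}"

definition Mp :: "nat \<Rightarrow> 'a::comm_ring_1 poly" where
  "Mp n = Polynomial.monom 1 n - 1"

lemma coeff_vp: "coeff (vp n c) i = (if i < n then c i else (0::'a::comm_monoid_add))"
  unfolding vp_def by (simp add: coeff_sum)

lemma vp_PD: "vp n c \<in> PD n"
  by (simp add: PD_def coeff_vp)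

lemma coeff_vp_vecs: "c \<in> vecs n \<Longrightarrow> (\<lambda>i. coeff (vp n c) i) = (c :: nat \<Rightarrow> 'a::comm_monoid_add)"
  by (auto simp: coeff_vp vecs_def)

lemma vp_coeff: "p \<in> PD m \<Longrightarrow> vp m (coeff p) = (p :: 'a::comm_monoid_add poly)"
  by (rule poly_eqI) (auto simp: coeff_vp PD_def)

lemma inj_vp: "inj_on (vp n) (vecs n :: (nat \<Rightarrow> 'a::comm_monoid_add) set)"
proof (rule inj_onI)
  fix x y :: "nat \<Rightarrow> 'a" assume "x \<in> vecs n" "y \<in> vecs n" "vp n x = vp n y"
  thus "x = y" using coeff_vp_vecs by metis
qed

lemma vp_image: "vp n ` (vecs n :: (nat \<Rightarrow> 'a::comm_monoid_add) set) = PD n"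
proof (intro equalityI subsetI)
  fix p :: "'a poly" assume "p \<in> PD n"
  moreover hence "coeff p \<in> vecs n" by (simp add: PD_def vecs_def)
  ultimately show "p \<in> vp n ` vecs n" using vp_coeff by (metis image_eqI)
qed (auto simp: vp_PD)

lemma card_PD: "card (PD m :: 'a::{comm_monoid_add,finite} poly set) = card (UNIV :: 'a set) ^ m"
proof -
  have "card (PD m :: 'a poly set) = card (vecs m :: (nat \<Rightarrow> 'a) set)"
    unfolding vp_image[symmetric] by (rule card_image[OF inj_vp])
  thus ?thesis using card_vecs by metis
qed

lemma PD_iff: "p \<in> PD m \<longleftrightarrow> (p = 0 \<or> degree p < m)"
proof
  assume "p \<in> PD m"
  show "p = 0 \<or> degree p < m"
  proof (rule ccontr)
    assume "\<not> (p = 0 \<or> degree p < m)"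
    hence "p \<noteq> 0" "degree p \<ge> m" by auto
    hence "coeff p (degree p) = 0" using \<open>p \<in> PD m\<close> by (simp add: PD_def)
    thus False using \<open>p \<noteq> 0\<close> by simp
  qed
next
  assume "p = 0 \<or> degree p < m"
  thus "p \<in> PD m" by (auto simp: PD_def coeff_eq_0)
qed

lemma vp_add: "vp n (\<lambda>i. a i + b i) = vp n a + vp n (b :: nat \<Rightarrow> 'a::comm_monoid_add)"
  by (rule poly_eqI) (simp add: coeff_vp)

lemma vp_smult: "vp n (\<lambda>i. s * a i) = smult s (vp n (a :: nat \<Rightarrow> 'a::comm_semiring_1))"
  by (rule poly_eqI) (simp add: coeff_vp)

lemma vp_zero: "vp n (\<lambda>_. 0) = (0 :: 'a::comm_monoid_add poly)"
  by (rule poly_eqI) (simp add: coeff_vp)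

lemma coeff_Mp: "coeff (Mp n :: 'a::comm_ring_1 poly) i = (if i = n then 1 else 0) - (if i = 0 then 1 else 0)"
  unfolding Mp_def by (simp add: coeff_1)

lemma degree_Mp: "0 < n \<Longrightarrow> degree (Mp n :: 'a::{comm_ring_1} poly) = n"
proof (rule antisym)
  assume "0 < n"
  show "degree (Mp n :: 'a poly) \<le> n" by (rule degree_le) (auto simp: coeff_Mp)
  have "coeff (Mp n :: 'a poly) n \<noteq> 0" using \<open>0 < n\<close> by (simp add: coeff_Mp)
  thus "n \<le> degree (Mp n :: 'a poly)" by (rule le_degree)
qed

lemma Mp_nz: "0 < n \<Longrightarrow> (Mp n :: 'a::{comm_ring_1} poly) \<noteq> 0"
proof
  assume "0 < n" "(Mp n :: 'a poly) = 0"
  hence "coeff (Mp n :: 'a poly) n = 0" by simp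
  thus False using \<open>0 < n\<close> by (simp add: coeff_Mp)
qed

lemma vp_shift:
  fixes c :: "nat \<Rightarrow> 'a::field"
  assumes n: "0 < n" and c: "c \<in> vecs n"
  shows "vp n (cshift n c) = pCons 0 (vp n c) mod Mp n"
proof -
  let ?r = "vp n (cshift n c)"
  have key: "pCons 0 (vp n c) = ?r + smult (c (n - 1)) (Mp n)"
  proof (rule poly_eqI)
    fix i
    show "coeff (pCons 0 (vp n c)) i = coeff (?r + smult (c (n - 1)) (Mp n)) i"
    proof (cases "i = 0")
      case True
      thus ?thesis using n by (simp add: coeff_vp coeff_Mp cshift_def)
    next
      case False
      then obtain j where j: "i = Suc j" by (cases i) auto
      have h: "coeff (pCons 0 (vp n c)) i = (if j < n then c j else 0)" using j by (simp add: coeff_vp)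
      show ?thesis
      proof (cases "i < n")
        case True
        hence "(i + n - 1) mod n = j" using j by simp
        thus ?thesis using True j by (simp add: coeff_vp coeff_Mp cshift_def)
      next
        case False
        hence "j \<ge> n - 1" using j by simp
        show ?thesis
        proof (cases "i = n")
          case True
          hence "j = n - 1" using j by simp
          thus ?thesis using h True n by (simp add: coeff_vp coeff_Mp cshift_def)
        next
          case False
          hence "\<not> j < n" using \<open>\<not> i < n\<close> j by simp
          thus ?thesis using j \<open>\<not> i < n\<close> False by (simp add: coeff_vp coeff_Mp cshift_def)
        qed
      qed
    qed
  qed
  have dr: "degree ?r < degree (Mp n :: 'a poly)"
  proof -
    have "?r \<in> PD n" by (rule vp_PD)
    hence "?r = 0 \<or> degree ?r < n" by (simp add: PD_iff)
    thus ?thesis using degree_Mp[OF n, where 'a='a] n by auto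
  qed
  have "pCons 0 (vp n c) mod Mp n = (?r + [:c (n - 1):] * Mp n) mod Mp n" using key by simp
  also have "\<dots> = ?r mod Mp n" by (rule mod_mult_self1)
  also have "\<dots> = ?r" using dr by (rule mod_poly_less)
  finally show ?thesis by simp
qed

locale cyc =
  fixes n :: nat and E :: "(nat \<Rightarrow> 'a::{field,finite}) set"
  assumes npos: "0 < n" and cyc: "cyclic_code n E"
begin

definition EP :: "'a poly set" where "EP = vp n ` E"
definition I :: "'a poly set" where "I = {f. f mod Mp n \<in> EP}"

lemma lin: "linear_code n E" using cyc unfolding cyclic_code_def by simp
lemma Evecs: "E \<subseteq> vecs n" by (rule linear_code_vecs[OF lin])
lemma Eshift: "x \<in> E \<Longrightarrow> cshift n x \<in> E" using cyc unfolding cyclic_code_def by simp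

lemma EP_PD: "p \<in> EP \<Longrightarrow> p \<in> PD n"
  unfolding EP_def using vp_PD by auto

lemma EP_mod: "p \<in> EP \<Longrightarrow> p mod Mp n = p"
proof -
  assume "p \<in> EP"
  hence "p = 0 \<or> degree p < n" using EP_PD PD_iff by blast
  hence "degree p < degree (Mp n :: 'a poly)" using degree_Mp[OF npos, where 'a='a] npos by auto
  thus ?thesis by (rule mod_poly_less)
qed

lemma EP_add: "p \<in> EP \<Longrightarrow> r \<in> EP \<Longrightarrow> p + r \<in> EP"
proof -
  assume "p \<in> EP" "r \<in> EP"
  then obtain a b where ab: "a \<in> E" "b \<in> E" "p = vp n a" "r = vp n b" unfolding EP_def by blast
  have "(\<lambda>i. a i + b i) \<in> E" by (rule linear_code_add[OF lin ab(1,2)])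
  moreover have "p + r = vp n (\<lambda>i. a i + b i)" using ab by (simp add: vp_add)
  ultimately show "p + r \<in> EP" unfolding EP_def by blast
qed

lemma EP_smult: "p \<in> EP \<Longrightarrow> smult s p \<in> EP"
proof -
  assume "p \<in> EP"
  then obtain a where a: "a \<in> E" "p = vp n a" unfolding EP_def by blast
  have "(\<lambda>i. s * a i) \<in> E" by (rule linear_code_smult[OF lin a(1)])
  moreover have "smult s p = vp n (\<lambda>i. s * a i)" using a by (simp add: vp_smult)
  ultimately show "smult s p \<in> EP" unfolding EP_def by blast
qed

lemma EP_zero: "0 \<in> EP"
proof -
  have "(\<lambda>_. 0) \<in> E" by (rule linear_code_zero[OF lin])
  thus ?thesis unfolding EP_def using vp_zero by (metis image_eqI)
qed

lemma EP_x: "p \<in> EP \<Longrightarrow> pCons 0 p mod Mp n \<in> EP"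
proof -
  assume "p \<in> EP"
  then obtain a where a: "a \<in> E" "p = vp n a" unfolding EP_def by blast
  have "a \<in> vecs n" using a Evecs by blast
  hence "vp n (cshift n a) = pCons 0 p mod Mp n" using vp_shift[OF npos] a by simp
  moreover have "cshift n a \<in> E" by (rule Eshift[OF a(1)])
  ultimately show ?thesis unfolding EP_def by (metis image_eqI)
qed

lemma I_add: "f \<in> I \<Longrightarrow> h \<in> I \<Longrightarrow> f + h \<in> I"
proof -
  assume "f \<in> I" "h \<in> I"
  hence s: "f mod Mp n + h mod Mp n \<in> EP" unfolding I_def by (simp add: EP_add)
  have "(f + h) mod Mp n = (f mod Mp n + h mod Mp n) mod Mp n" by (simp add: mod_add_eq)
  also have "\<dots> = f mod Mp n + h mod Mp n" using s by (rule EP_mod)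
  finally show ?thesis unfolding I_def using s by simp
qed

lemma I_smult: "f \<in> I \<Longrightarrow> smult s f \<in> I"
  unfolding I_def by (simp add: mod_smult_left EP_smult)

lemma I_x: "f \<in> I \<Longrightarrow> pCons 0 f \<in> I"
proof -
  assume "f \<in> I"
  hence "pCons 0 (f mod Mp n) mod Mp n \<in> EP" unfolding I_def by (simp add: EP_x)
  moreover have "pCons 0 (f mod Mp n) mod Mp n = pCons 0 f mod Mp n"
    using mod_mult_right_eq[of "[:0, 1:]" f "Mp n"] by simp
  ultimately show ?thesis unfolding I_def by simp
qed

lemma I_zero: "0 \<in> I"
  unfolding I_def using EP_zero by simp

lemma I_mult: "f \<in> I \<Longrightarrow> h * f \<in> I"
proof (induction h rule: pCons_induct)
  case 0
  then show ?case using I_zero by simp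
next
  case (pCons a h)
  have "pCons a h * f = smult a f + pCons 0 (h * f)" by simp
  moreover have "smult a f \<in> I" using pCons.prems by (rule I_smult)
  moreover have "pCons 0 (h * f) \<in> I" using pCons.IH[OF pCons.prems] by (rule I_x)
  ultimately show ?case using I_add by simp
qed

lemma I_M: "Mp n \<in> I"
  unfolding I_def using EP_zero by simp

lemma ex_g: "\<exists>g. g \<in> I \<and> g \<noteq> 0 \<and> (\<forall>f\<in>I. f \<noteq> 0 \<longrightarrow> degree g \<le> degree f)"
proof -
  define P where "P d \<longleftrightarrow> (\<exists>f\<in>I. f \<noteq> 0 \<and> degree f = d)" for d
  have "P (degree (Mp n :: 'a poly))" unfolding P_def using I_M Mp_nz[OF npos, where 'a='a] by blast
  hence "\<exists>d. P d" by blast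
  then obtain d where d: "P d" "\<forall>d'<d. \<not> P d'" using exists_least_iff[of P] by blast
  then obtain g where g: "g \<in> I" "g \<noteq> 0" "degree g = d" unfolding P_def by blast
  have "\<forall>f\<in>I. f \<noteq> 0 \<longrightarrow> degree g \<le> degree f"
  proof (intro ballI impI)
    fix f assume "f \<in> I" "f \<noteq> 0"
    hence "P (degree f)" unfolding P_def by blast
    thus "degree g \<le> degree f" using d(2) g(3) by (meson not_le)
  qed
  thus ?thesis using g by blast
qed

definition g :: "'a poly" where
  "g = (SOME g. g \<in> I \<and> g \<noteq> 0 \<and> (\<forall>f\<in>I. f \<noteq> 0 \<longrightarrow> degree g \<le> degree f))"

lemma g_props: "g \<in> I" "g \<noteq> 0" "\<And>f. f \<in> I \<Longrightarrow> f \<noteq> 0 \<Longrightarrow> degree g \<le> degree f"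
  using someI_ex[OF ex_g] unfolding g_def[symmetric] by blast+

lemma I_iff: "f \<in> I \<longleftrightarrow> g dvd f"
proof
  assume f: "f \<in> I"
  have "(f div g) * g \<in> I" by (rule I_mult[OF g_props(1)])
  hence "smult (-1) ((f div g) * g) \<in> I" by (rule I_smult)
  hence "f + smult (-1) ((f div g) * g) \<in> I" using f by (intro I_add)
  moreover have "f + smult (-1) ((f div g) * g) = f mod g"
    using minus_div_mult_eq_mod[of f g] by simp
  ultimately have r: "f mod g \<in> I" by simp
  show "g dvd f"
  proof (rule ccontr)
    assume "\<not> g dvd f"
    hence "f mod g \<noteq> 0" by (simp add: mod_eq_0_iff_dvd)
    hence "degree (f mod g) < degree g" using degree_mod_less'[OF g_props(2)] by simp
    moreover have "degree g \<le> degree (f mod g)" using g_props(3)[OF r \<open>f mod g \<noteq> 0\<close>] .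
    ultimately show False by simp
  qed
next
  assume "g dvd f"
  then obtain h where "f = g * h" by (elim dvdE)
  hence "f = h * g" by (simp add: mult.commute)
  thus "f \<in> I" using I_mult[OF g_props(1)] by simp
qed

lemma EP_char: "EP = {p \<in> PD n. g dvd p}"
proof (intro equalityI subsetI)
  fix p assume p: "p \<in> EP"
  hence "p \<in> I" unfolding I_def using EP_mod by simp
  thus "p \<in> {p \<in> PD n. g dvd p}" using EP_PD[OF p] I_iff by simp
next
  fix p assume p: "p \<in> {p \<in> PD n. g dvd p}"
  hence "p \<in> I" using I_iff by simp
  hence "p mod Mp n \<in> EP" unfolding I_def by simp
  moreover have "p = 0 \<or> degree p < n" using p PD_iff by blast
  hence "degree p < degree (Mp n :: 'a poly)" using degree_Mp[OF npos, where 'a='a] npos by auto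
  hence "p mod Mp n = p" by (rule mod_poly_less)
  ultimately show "p \<in> EP" by simp
qed

lemma g_dvd_M: "g dvd Mp n" using I_M I_iff by simp

lemma deg_g: "degree g \<le> n"
  using dvd_imp_degree_le[OF g_dvd_M Mp_nz[OF npos]] degree_Mp[OF npos, where 'a='a] by simp

lemma card_E: "card E = card (UNIV :: 'a set) ^ (n - degree g)"
proof -
  have "card E = card EP" unfolding EP_def using inj_on_subset[OF inj_vp Evecs] by (simp add: card_image)
  also have "EP = (\<lambda>h. g * h) ` PD (n - degree g)"
  proof (intro equalityI subsetI)
    fix p assume "p \<in> EP"
    hence p: "p \<in> PD n" "g dvd p" using EP_char by auto
    then obtain h where h: "p = g * h" by (elim dvdE)
    have "h \<in> PD (n - degree g)"
    proof (cases "h = 0")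
      case False
      hence "p \<noteq> 0" using h g_props(2) by simp
      hence "degree p < n" using p(1) PD_iff by blast
      moreover have "degree p = degree g + degree h" using h g_props(2) False by (simp add: degree_mult_eq)
      ultimately have "degree h < n - degree g" by linarith
      thus ?thesis by (simp add: PD_iff)
    qed (simp add: PD_def)
    thus "p \<in> (\<lambda>h. g * h) ` PD (n - degree g)" using h by blast
  next
    fix p assume "p \<in> (\<lambda>h. g * h) ` PD (n - degree g)"
    then obtain h where h: "h \<in> PD (n - degree g)" "p = g * h" by blast
    have "p \<in> PD n"
    proof (cases "h = 0")
      case False
      hence "degree h < n - degree g" using h(1) PD_iff by blast
      moreover have "degree p = degree g + degree h" using h g_props(2) False by (simp add: degree_mult_eq)
      ultimately have "degree p < n" by simp
      thus ?thesis using PD_iff by blast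
    qed (simp add: h PD_def)
    thus "p \<in> EP" using EP_char h by auto
  qed
  also have "card ((\<lambda>h. g * h) ` PD (n - degree g)) = card (PD (n - degree g) :: 'a poly set)"
    by (rule card_image) (auto intro: inj_onI simp: g_props(2))
  also have "\<dots> = card (UNIV :: 'a set) ^ (n - degree g)" by (rule card_PD)
  finally show ?thesis .
qed

end

context
  fixes emb :: "'a::field \<Rightarrow> 'b::field"
  assumes fe: "field_embedding emb"
begin

lemma fe_add: "emb (x + y) = emb x + emb y" using fe unfolding field_embedding_def by blast
lemma fe_mult: "emb (x * y) = emb x * emb y" using fe unfolding field_embedding_def by blast
lemma fe_1: "emb 1 = 1" using fe unfolding field_embedding_def by blast
lemma fe_0: "emb 0 = 0"
proof -
  have h: "emb 0 + emb 0 = emb 0" using fe_add[of 0 0] by simp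
  thus ?thesis by (metis add_cancel_right_right)
qed
lemma fe_neg: "emb (- x) = - emb x"
proof -
  have "emb (x + - x) = emb x + emb (- x)" by (rule fe_add)
  hence "0 = emb x + emb (- x)" using fe_0 by simp
  thus ?thesis by (simp add: eq_neg_iff_add_eq_0 add.commute)
qed
lemma fe_diff: "emb (x - y) = emb x - emb y"
  using fe_add[of x "- y"] fe_neg[of y] by simp
lemma fe_nz: "x \<noteq> 0 \<Longrightarrow> emb x \<noteq> 0"
proof
  assume "x \<noteq> 0" "emb x = 0"
  have "emb (x * inverse x) = emb x * emb (inverse x)" by (rule fe_mult)
  hence "emb 1 = 0" using \<open>x \<noteq> 0\<close> \<open>emb x = 0\<close> by simp
  thus False using fe_1 by simp
qed
lemma fe_sum: "emb (sum f A) = (\<Sum>i\<in>A. emb (f i))"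
proof (induction A rule: infinite_finite_induct)
  case (infinite A) thus ?case using fe_0 by simp
next
  case empty thus ?case using fe_0 by simp
next
  case (insert x F) thus ?case using fe_add by simp
qed

lemma coeff_mp: "coeff (map_poly emb p) i = emb (coeff p i)"
  by (rule coeff_map_poly) (rule fe_0)

lemma mp_add: "map_poly emb (p + r) = map_poly emb p + map_poly emb r"
  by (rule poly_eqI) (simp add: coeff_mp fe_add)

lemma mp_mult: "map_poly emb (p * r) = map_poly emb p * map_poly emb r"
  by (rule poly_eqI) (simp add: coeff_mp coeff_mult fe_sum fe_mult)

lemma degree_mp: "degree (map_poly emb p) = degree p"
  by (rule degree_map_poly) (rule fe_nz)

lemma mp_nz: "p \<noteq> 0 \<Longrightarrow> map_poly emb p \<noteq> 0"
proof
  assume "p \<noteq> 0" "map_poly emb p = 0"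
  hence "coeff (map_poly emb p) (degree p) = 0" by simp
  hence "emb (lead_coeff p) = 0" by (simp add: coeff_mp)
  thus False using fe_nz \<open>p \<noteq> 0\<close> by simp
qed

lemma mp_Mp: "map_poly emb (Mp n) = Mp n"
  by (rule poly_eqI) (simp add: coeff_mp coeff_Mp fe_diff fe_1 fe_0)

end

lemma poly_lt: "degree (p :: 'c::comm_ring_1 poly) < m \<Longrightarrow> poly p x = (\<Sum>i<m. coeff p i * x ^ i)"
proof -
  assume d: "degree p < m"
  have "poly p x = (\<Sum>i\<le>degree p. coeff p i * x ^ i)" by (rule poly_altdef)
  also have "\<dots> = (\<Sum>i<m. coeff p i * x ^ i)"
    by (rule sum.mono_neutral_left) (use d in \<open>auto simp: coeff_eq_0\<close>)
  finally show ?thesis .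
qed

locale cycr = cyc n E for n :: nat and E :: "(nat \<Rightarrow> 'a::{field,finite}) set" +
  fixes emb :: "'a \<Rightarrow> 'b::field" and \<alpha> :: 'b
  assumes fe: "field_embedding emb" and pr: "primitive_root_of_unity n \<alpha>"
begin

lemma an: "\<alpha> ^ n = 1" using pr unfolding primitive_root_of_unity_def by simp
lemma anm: "0 < m \<Longrightarrow> m < n \<Longrightarrow> \<alpha> ^ m \<noteq> 1" using pr unfolding primitive_root_of_unity_def by simp
lemma a0: "\<alpha> \<noteq> 0" using an npos by (metis power_0_left zero_neq_one less_not_refl2)

lemma inj_pow: "inj_on (\<lambda>i. \<alpha> ^ i) {..<n}"
proof -
  have *: "\<alpha> ^ i \<noteq> \<alpha> ^ j" if "i < j" "j < n" for i j
  proof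
    assume "\<alpha> ^ i = \<alpha> ^ j"
    moreover have "\<alpha> ^ j = \<alpha> ^ i * \<alpha> ^ (j - i)" using that by (simp flip: power_add)
    ultimately have "\<alpha> ^ (j - i) = 1" using a0 by simp
    thus False using anm[of "j - i"] that by simp
  qed
  show ?thesis
  proof (rule inj_onI)
    fix i j assume "i \<in> {..<n}" "j \<in> {..<n}" "\<alpha> ^ i = \<alpha> ^ j"
    thus "i = j" using *[of i j] *[of j i] by (metis lessThan_iff linorder_neqE_nat)
  qed
qed

lemma poly_M_root: "poly (Mp n :: 'b poly) (\<alpha> ^ i) = 0"
proof -
  have "poly (Mp n :: 'b poly) (\<alpha> ^ i) = (\<alpha> ^ i) ^ n - 1" by (simp add: Mp_def poly_monom)
  also have "(\<alpha> ^ i) ^ n = (\<alpha> ^ n) ^ i" by (simp flip: power_mult add: mult.commute)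
  finally show ?thesis using an by simp
qed

lemma eval_vp: "(\<Sum>j<n. emb (c j) * (\<alpha> ^ i) ^ j) = poly (map_poly emb (vp n c)) (\<alpha> ^ i)"
proof -
  have "vp n c = 0 \<or> degree (vp n c) < n" using vp_PD PD_iff by blast
  hence "degree (map_poly emb (vp n c)) < n" using degree_mp[OF fe] npos by auto
  hence "poly (map_poly emb (vp n c)) (\<alpha> ^ i) = (\<Sum>j<n. coeff (map_poly emb (vp n c)) j * (\<alpha> ^ i) ^ j)"
    by (rule poly_lt)
  also have "\<dots> = (\<Sum>j<n. emb (c j) * (\<alpha> ^ i) ^ j)"
    by (rule sum.cong) (simp_all add: coeff_mp[OF fe] coeff_vp)
  finally show ?thesis by simp
qed

lemma ds_char: "defining_set emb \<alpha> n E = {i. i < n \<and> poly (map_poly emb g) (\<alpha> ^ i) = 0}"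
proof (intro equalityI subsetI)
  fix i assume "i \<in> defining_set emb \<alpha> n E"
  hence i: "i < n" "\<forall>c\<in>E. (\<Sum>j<n. emb (c j) * (\<alpha> ^ i) ^ j) = 0" unfolding defining_set_def by auto
  have "g mod Mp n \<in> EP" using g_props(1) unfolding I_def by simp
  then obtain c where c: "c \<in> E" "vp n c = g mod Mp n" unfolding EP_def by (metis imageE)
  have r: "poly (map_poly emb (g mod Mp n)) (\<alpha> ^ i) = 0" using i(2) c eval_vp by metis
  have "g = (g div Mp n) * Mp n + g mod Mp n" by simp
  hence "map_poly emb g = map_poly emb (g div Mp n) * map_poly emb (Mp n) + map_poly emb (g mod Mp n)"
    by (metis mp_add[OF fe] mp_mult[OF fe])
  hence "poly (map_poly emb g) (\<alpha> ^ i) = 0" using r poly_M_root by (simp add: mp_Mp[OF fe])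
  thus "i \<in> {i. i < n \<and> poly (map_poly emb g) (\<alpha> ^ i) = 0}" using i by simp
next
  fix i assume "i \<in> {i. i < n \<and> poly (map_poly emb g) (\<alpha> ^ i) = 0}"
  hence i: "i < n" "poly (map_poly emb g) (\<alpha> ^ i) = 0" by auto
  have "(\<Sum>j<n. emb (c j) * (\<alpha> ^ i) ^ j) = 0" if c: "c \<in> E" for c
  proof -
    have "vp n c \<in> EP" unfolding EP_def using c by blast
    hence "g dvd vp n c" using EP_char by auto
    then obtain h where "vp n c = g * h" by (elim dvdE)
    hence "poly (map_poly emb (vp n c)) (\<alpha> ^ i) = 0" using i(2) by (simp add: mp_mult[OF fe])
    thus ?thesis using eval_vp by simp
  qed
  thus "i \<in> defining_set emb \<alpha> n E" unfolding defining_set_def using i by simp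
qed

lemma card_ds: "card (defining_set emb \<alpha> n E) = degree g"
proof -
  define A where "A = (\<lambda>i. \<alpha> ^ i) ` {..<n}"
  define G where "G = map_poly emb g"
  obtain h where h: "Mp n = g * h" using g_dvd_M by (elim dvdE)
  have hnz: "h \<noteq> 0" using h Mp_nz[OF npos, where 'a='a] by auto
  define H where "H = map_poly emb h"
  have GH: "Mp n = G * H" unfolding G_def H_def using h mp_Mp[OF fe] mp_mult[OF fe] by metis
  have Gnz: "G \<noteq> 0" unfolding G_def using mp_nz[OF fe g_props(2)] .
  have Hnz: "H \<noteq> 0" unfolding H_def using mp_nz[OF fe hnz] .
  have degs: "degree G + degree H = n"
  proof -
    have "degree (Mp n :: 'a poly) = degree g + degree h" using h g_props(2) hnz by (simp add: degree_mult_eq)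
    thus ?thesis using degree_Mp[OF npos, where 'a='a] degree_mp[OF fe] G_def H_def by simp
  qed
  have cardA: "card A = n" unfolding A_def using card_image[OF inj_pow] by simp
  define RG where "RG = {x. poly G x = 0}"
  define RH where "RH = {x. poly H x = 0}"
  have AU: "A = (A \<inter> RG) \<union> (A \<inter> RH)"
  proof -
    have "A \<subseteq> RG \<union> RH"
    proof
      fix x assume "x \<in> A"
      then obtain i where "x = \<alpha> ^ i" unfolding A_def by blast
      hence "poly (G * H) x = 0" using poly_M_root GH by metis
      thus "x \<in> RG \<union> RH" unfolding RG_def RH_def by simp
    qed
    thus ?thesis by blast
  qed
  have finA: "finite A" unfolding A_def by simp
  have "n \<le> card (A \<inter> RG) + card (A \<inter> RH)"
    using cardA AU card_Un_le[of "A \<inter> RG" "A \<inter> RH"] by simp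
  moreover have "card (A \<inter> RH) \<le> degree H"
  proof -
    have "card (A \<inter> RH) \<le> card RH" using poly_roots_finite[OF Hnz] unfolding RH_def by (intro card_mono) auto
    also have "\<dots> \<le> degree H" unfolding RH_def by (rule card_poly_roots_bound[OF Hnz])
    finally show ?thesis .
  qed
  moreover have cg: "card (A \<inter> RG) \<le> degree G"
  proof -
    have "card (A \<inter> RG) \<le> card RG" using poly_roots_finite[OF Gnz] unfolding RG_def by (intro card_mono) auto
    also have "\<dots> \<le> degree G" unfolding RG_def by (rule card_poly_roots_bound[OF Gnz])
    finally show ?thesis .
  qed
  ultimately have e: "card (A \<inter> RG) = degree G" using degs by linarith
  have "(\<lambda>i. \<alpha> ^ i) ` defining_set emb \<alpha> n E = A \<inter> RG"
    unfolding ds_char A_def RG_def G_def by auto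
  moreover have "inj_on (\<lambda>i. \<alpha> ^ i) (defining_set emb \<alpha> n E)"
    by (rule inj_on_subset[OF inj_pow]) (auto simp: ds_char)
  ultimately have "card (defining_set emb \<alpha> n E) = card (A \<inter> RG)" by (metis card_image)
  thus ?thesis using e degree_mp[OF fe] G_def by simp
qed

lemma cyclic_main: "card E = card (UNIV :: 'a set) ^ (n - card (defining_set emb \<alpha> n E))
   \<and> card (defining_set emb \<alpha> n E) \<le> n"
  using card_E card_ds deg_g by simp

end

lemma sig1: "0 < (n::nat) \<Longrightarrow> i < n \<Longrightarrow> ((i + n - 1) mod n + 1) mod n = i"
proof -
  assume "0 < n" "i < n"
  have "((i + n - 1) mod n + 1) mod n = (i + n - 1 + 1) mod n" by (rule mod_add_left_eq)
  also have "i + n - 1 + 1 = i + n" using \<open>0 < n\<close> by simp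
  finally show ?thesis using \<open>i < n\<close> by simp
qed

lemma sig2: "0 < (n::nat) \<Longrightarrow> i < n \<Longrightarrow> ((i + 1) mod n + n - 1) mod n = i"
proof -
  assume "0 < n" "i < n"
  have "(i + 1) mod n + n - 1 = (i + 1) mod n + (n - 1)" using \<open>0 < n\<close> by linarith
  hence "((i + 1) mod n + n - 1) mod n = ((i + 1) mod n + (n - 1)) mod n" by simp
  also have "\<dots> = (i + 1 + (n - 1)) mod n" by (rule mod_add_left_eq)
  also have "i + 1 + (n - 1) = i + n" using \<open>0 < n\<close> by simp
  finally show ?thesis using \<open>i < n\<close> by simp
qed

lemma sum_shift:
  assumes "0 < (n::nat)"
  shows "(\<Sum>i<n. f ((i + n - 1) mod n)) = (\<Sum>i<n. (f i :: 'c::comm_monoid_add))"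
  by (rule sum.reindex_bij_witness[of _ "\<lambda>j. (j + 1) mod n" "\<lambda>i. (i + n - 1) mod n"])
     (use assms sig1[OF assms] sig2[OF assms] in auto)

lemma herm_shift:
  assumes "0 < n"
  shows "herm q n (cshift n x) (cshift n y) = herm q n x (y :: nat \<Rightarrow> 'a::field)"
proof -
  have "herm q n (cshift n x) (cshift n y) = (\<Sum>i<n. (\<lambda>j. x j * y j ^ q) ((i + n - 1) mod n))"
    unfolding herm_def cshift_def by (rule sum.cong) auto
  also have "\<dots> = herm q n x y" unfolding herm_def by (rule sum_shift[OF assms])
  finally show ?thesis .
qed

lemma cshift_vecs: "cshift n x \<in> vecs n"
  by (simp add: cshift_def vecs_def)

lemma cshift_inj:
  assumes "0 < n"
  shows "inj_on (cshift n) (vecs n :: (nat \<Rightarrow> 'a::zero) set)"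
proof (rule inj_onI)
  fix x y :: "nat \<Rightarrow> 'a" assume xy: "x \<in> vecs n" "y \<in> vecs n" "cshift n x = cshift n y"
  show "x = y"
  proof
    fix j
    show "x j = y j"
    proof (cases "j < n")
      case True
      let ?i = "(j + 1) mod n"
      have "?i < n" using assms by simp
      have "cshift n x ?i = cshift n y ?i" using xy(3) by simp
      hence "x ((?i + n - 1) mod n) = y ((?i + n - 1) mod n)" using \<open>?i < n\<close> by (simp add: cshift_def)
      thus ?thesis using sig2[OF assms True] by simp
    next
      case False thus ?thesis using xy(1,2) by (simp add: vecs_def)
    qed
  qed
qed

lemma cyclic_shift_onto:
  assumes "0 < n" "cyclic_code n (C :: (nat \<Rightarrow> 'a::{field,finite}) set)"
  shows "cshift n ` C = C"
proof -
  have lin: "linear_code n C" using assms(2) unfolding cyclic_code_def by simp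
  have sub: "cshift n ` C \<subseteq> C" using assms(2) unfolding cyclic_code_def by auto
  have "inj_on (cshift n) C" using inj_on_subset[OF cshift_inj[OF assms(1)] linear_code_vecs[OF lin]] .
  hence "card (cshift n ` C) = card C" by (rule card_image)
  thus ?thesis using sub linear_code_finite[OF lin] by (intro card_subset_eq) auto
qed

context fq
begin

lemma herm_dual_cyclic:
  assumes n: "0 < n" and C: "cyclic_code n (C :: (nat \<Rightarrow> 'a) set)"
  shows "cyclic_code n (herm_dual q n C)"
  unfolding cyclic_code_def
proof (intro conjI ballI)
  show "linear_code n (herm_dual q n C)" by (rule herm_dual_linear)
next
  fix x assume x: "x \<in> herm_dual q n C"
  have "herm q n (cshift n x) c = 0" if c: "c \<in> C" for c
  proof -
    have "c \<in> cshift n ` C" using c cyclic_shift_onto[OF n C] by simp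
    then obtain c' where c': "c' \<in> C" "c = cshift n c'" by blast
    have "herm q n (cshift n x) c = herm q n x c'" using c' herm_shift[OF n] by simp
    also have "\<dots> = 0" using x c' unfolding herm_dual_def by simp
    finally show ?thesis .
  qed
  thus "cshift n x \<in> herm_dual q n C" unfolding herm_dual_def using cshift_vecs by simp
qed


end

definition sumset :: "(nat \<Rightarrow> 'a::field) set \<Rightarrow> (nat \<Rightarrow> 'a) set \<Rightarrow> (nat \<Rightarrow> 'a) set" where
  "sumset C D = (\<lambda>(c, d). (\<lambda>i. c i + d i)) ` (C \<times> D)"

lemma sumset_cyclic:
  assumes C: "cyclic_code n C" and D: "cyclic_code n D"
  shows "cyclic_code n (sumset C D)"
proof -
  have lC: "linear_code n C" and lD: "linear_code n D" using C D unfolding cyclic_code_def by simp_all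
  have mem: "(\<lambda>i. c i + d i) \<in> sumset C D" if "c \<in> C" "d \<in> D" for c d
    unfolding sumset_def using that by (intro image_eqI[where x = "(c, d)"]) auto
  have el: "\<exists>c\<in>C. \<exists>d\<in>D. x = (\<lambda>i. c i + d i)" if "x \<in> sumset C D" for x
    using that unfolding sumset_def by auto
  show ?thesis unfolding cyclic_code_def linear_code_def
  proof (intro conjI ballI allI subsetI)
    fix x assume "x \<in> sumset C D"
    then obtain c d where cd: "c \<in> C" "d \<in> D" "x = (\<lambda>i. c i + d i)" using el by blast
    have "c \<in> vecs n" "d \<in> vecs n" using cd linear_code_vecs[OF lC] linear_code_vecs[OF lD] by auto
    thus "x \<in> vecs n" using cd(3) vecs_add by simp
  next
    have "(\<lambda>i. (\<lambda>_. 0) i + (\<lambda>_. 0) i) \<in> sumset C D"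
      using mem linear_code_zero[OF lC] linear_code_zero[OF lD] by blast
    thus "(\<lambda>_. 0) \<in> sumset C D" by simp
  next
    fix x y assume "x \<in> sumset C D" "y \<in> sumset C D"
    then obtain c d c' d' where cd: "c \<in> C" "d \<in> D" "x = (\<lambda>i. c i + d i)"
      and cd': "c' \<in> C" "d' \<in> D" "y = (\<lambda>i. c' i + d' i)" using el by metis
    have "(\<lambda>i. (\<lambda>i. c i + c' i) i + (\<lambda>i. d i + d' i) i) \<in> sumset C D"
      by (rule mem) (simp_all add: linear_code_add[OF lC cd(1) cd'(1)] linear_code_add[OF lD cd(2) cd'(2)])
    thus "(\<lambda>i. x i + y i) \<in> sumset C D" using cd(3) cd'(3) by (simp add: algebra_simps)
  next
    fix a x assume "x \<in> sumset C D"
    then obtain c d where cd: "c \<in> C" "d \<in> D" "x = (\<lambda>i. c i + d i)" using el by blast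
    have "(\<lambda>i. (\<lambda>i. a * c i) i + (\<lambda>i. a * d i) i) \<in> sumset C D"
      by (rule mem) (simp_all add: linear_code_smult[OF lC cd(1)] linear_code_smult[OF lD cd(2)])
    thus "(\<lambda>i. a * x i) \<in> sumset C D" using cd(3) by (simp add: algebra_simps)
  next
    fix x assume "x \<in> sumset C D"
    then obtain c d where cd: "c \<in> C" "d \<in> D" "x = (\<lambda>i. c i + d i)" using el by blast
    have "cshift n c \<in> C" "cshift n d \<in> D" using C D cd unfolding cyclic_code_def by simp_all
    hence "(\<lambda>i. cshift n c i + cshift n d i) \<in> sumset C D" by (rule mem)
    moreover have "cshift n x = (\<lambda>i. cshift n c i + cshift n d i)" using cd(3) by (auto simp: cshift_def)
    ultimately show "cshift n x \<in> sumset C D" by simp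
  qed
qed

lemma sumset_ds:
  assumes fe: "field_embedding emb" and lC: "linear_code n C" and lD: "linear_code n D"
  shows "defining_set emb \<alpha> n (sumset C D) = defining_set emb \<alpha> n C \<inter> defining_set emb \<alpha> n D"
proof -
  have ev: "(\<Sum>j<n. emb (c j + d j) * \<beta> ^ j) = (\<Sum>j<n. emb (c j) * \<beta> ^ j) + (\<Sum>j<n. emb (d j) * \<beta> ^ j)" for c d and \<beta>
    by (simp add: fe_add[OF fe] algebra_simps sum.distrib)
  have CS: "c \<in> sumset C D" if "c \<in> C" for c
  proof -
    have "(\<lambda>i. c i + (\<lambda>_. 0) i) \<in> sumset C D" unfolding sumset_def
      using that linear_code_zero[OF lD] by (intro image_eqI[where x = "(c, \<lambda>_. 0)"]) auto
    thus ?thesis by simp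
  qed
  have DS: "d \<in> sumset C D" if "d \<in> D" for d
  proof -
    have "(\<lambda>i. (\<lambda>_. 0) i + d i) \<in> sumset C D" unfolding sumset_def
      using that linear_code_zero[OF lC] by (intro image_eqI[where x = "(\<lambda>_. 0, d)"]) auto
    thus ?thesis by simp
  qed
  show ?thesis
  proof (intro equalityI subsetI)
    fix i assume "i \<in> defining_set emb \<alpha> n (sumset C D)"
    thus "i \<in> defining_set emb \<alpha> n C \<inter> defining_set emb \<alpha> n D"
      unfolding defining_set_def using CS DS by auto
  next
    fix i assume i: "i \<in> defining_set emb \<alpha> n C \<inter> defining_set emb \<alpha> n D"
    have "(\<Sum>j<n. emb (x j) * (\<alpha> ^ i) ^ j) = 0" if "x \<in> sumset C D" for x
    proof -
      obtain c d where cd: "c \<in> C" "d \<in> D" "x = (\<lambda>i. c i + d i)" using \<open>x \<in> sumset C D\<close> unfolding sumset_def by auto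
      show ?thesis using i cd ev unfolding defining_set_def by simp
    qed
    thus "i \<in> defining_set emb \<alpha> n (sumset C D)" using i unfolding defining_set_def by simp
  qed
qed

lemma sumset_card:
  assumes lC: "linear_code n (C :: (nat \<Rightarrow> 'a::{field,finite}) set)" and lD: "linear_code n D"
  shows "card C * card D = card (C \<inter> D) * card (sumset C D)"
proof -
  let ?f = "\<lambda>(c, d). (\<lambda>i. c i + (d i :: 'a))"
  have fin: "finite (C \<times> D)" using linear_code_finite[OF lC] linear_code_finite[OF lD] by simp
  have "card (C \<times> D) = card (C \<inter> D) * card (?f ` (C \<times> D))"
  proof (rule card_fibers[OF fin])
    fix w assume "w \<in> ?f ` (C \<times> D)"
    then obtain c0 d0 where c0: "c0 \<in> C" "d0 \<in> D" "w = (\<lambda>i. c0 i + d0 i)" by auto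
    let ?g = "\<lambda>u. ((\<lambda>i. c0 i + u i), (\<lambda>i. d0 i - u i))"
    have "{a \<in> C \<times> D. ?f a = w} = ?g ` (C \<inter> D)"
    proof (intro equalityI subsetI)
      fix a assume "a \<in> {a \<in> C \<times> D. ?f a = w}"
      then obtain c d where a: "a = (c, d)" "c \<in> C" "d \<in> D" "(\<lambda>i. c i + d i) = w" by auto
      let ?u = "\<lambda>i. c i - c0 i"
      have uC: "?u \<in> C" by (rule linear_code_sub[OF lC a(2) c0(1)])
      have "\<And>i. c i + d i = c0 i + d0 i" using a(4) c0(3) by meson
      hence ueq: "?u = (\<lambda>i. d0 i - d i)" by (auto simp: algebra_simps fun_eq_iff)
      have "(\<lambda>i. d0 i - d i) \<in> D" by (rule linear_code_sub[OF lD c0(2) a(3)])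
      hence uD: "?u \<in> D" using ueq by simp
      have cx: "c x = c0 x + (d0 x - d x)" for x
      proof -
        have "c x - c0 x = d0 x - d x" using ueq by meson
        thus ?thesis by (metis diff_add_cancel add.commute)
      qed
      have "a = ?g ?u" using a(1) cx ueq by (simp add: fun_eq_iff)
      thus "a \<in> ?g ` (C \<inter> D)" using uC uD by (intro image_eqI[where x = "?u"]) auto
    next
      fix a assume "a \<in> ?g ` (C \<inter> D)"
      then obtain u where u: "u \<in> C" "u \<in> D" "a = ?g u" by blast
      have "(\<lambda>i. c0 i + u i) \<in> C" by (rule linear_code_add[OF lC c0(1) u(1)])
      moreover have "(\<lambda>i. d0 i - u i) \<in> D" by (rule linear_code_sub[OF lD c0(2) u(2)])
      moreover have "?f a = w"
      proof -
        have "?f a = (\<lambda>i. (c0 i + u i) + (d0 i - u i))" using u(3) by simp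
        also have "\<dots> = w" using c0(3) by simp
        finally show ?thesis .
      qed
      ultimately show "a \<in> {a \<in> C \<times> D. ?f a = w}" using u(3) by simp
    qed
    moreover have "inj_on ?g (C \<inter> D)"
    proof (rule inj_onI)
      fix u v assume "?g u = ?g v"
      hence "(\<lambda>i. c0 i + u i) = (\<lambda>i. c0 i + v i)" by simp
      hence "c0 i + u i = c0 i + v i" for i by (rule fun_cong[where x = i, elim_format]) simp
      thus "u = v" by (intro ext) simp
    qed
    ultimately show "card {a \<in> C \<times> D. ?f a = w} = card (C \<inter> D)" by (simp add: card_image)
  qed
  thus ?thesis unfolding sumset_def by (simp add: card_cartesian_product)
qed

context fq2
begin

definition phi :: "(nat \<Rightarrow> 'a) \<Rightarrow> (nat \<Rightarrow> 'a) \<times> (nat \<Rightarrow> 'a)" where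
  "phi x = ((\<lambda>i. fa (x i)), (\<lambda>i. fb (x i)))"

lemma phi_inj: "inj phi"
proof (rule injI)
  fix x y assume "phi x = phi y"
  hence ee: "(\<lambda>i. fa (x i)) = (\<lambda>i. fa (y i))" "(\<lambda>i. fb (x i)) = (\<lambda>i. fb (y i))"
    unfolding phi_def by simp_all
  have e: "fa (x i) = fa (y i)" "fb (x i) = fb (y i)" for i
    using fun_cong[OF ee(1), of i] fun_cong[OF ee(2), of i] by simp_all
  show "x = y"
  proof
    fix i
    have "x i = fa (x i) * w0 + fb (x i) * e2" by (rule decomp)
    also have "\<dots> = fa (y i) * w0 + fb (y i) * e2" using e by simp
    also have "\<dots> = y i" by (rule decomp[symmetric])
    finally show "x i = y i" .
  qed
qed

lemma phi_zero: "phi (\<lambda>_. 0) = ((\<lambda>_. 0), (\<lambda>_. 0))"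
  unfolding phi_def by simp

lemma phi_eq_zero: "phi x = ((\<lambda>_. 0), (\<lambda>_. 0)) \<longleftrightarrow> x = (\<lambda>_. 0)"
proof
  assume "phi x = ((\<lambda>_. 0), (\<lambda>_. 0))"
  hence "phi x = phi (\<lambda>_. 0)" using phi_zero by simp
  thus "x = (\<lambda>_. 0)" using phi_inj by (rule injD[rotated])
qed (simp add: phi_zero)

lemma phi_svecs: "x \<in> vecs n \<Longrightarrow> phi x \<in> svecs K n"
  unfolding phi_def svecs_def vecs_def by (simp add: K_def fa_K fb_K)

lemma svecs_phi:
  assumes "v \<in> svecs K n"
  shows "\<exists>x\<in>vecs n. v = phi x"
proof -
  obtain a b where v: "v = (a, b)" by (cases v)
  have ab: "\<forall>i. a i \<in> K \<and> b i \<in> K" "\<forall>i\<ge>n. a i = 0 \<and> b i = 0" using assms v unfolding svecs_def by auto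
  let ?x = "\<lambda>i. a i * w0 + b i * e2"
  have "?x \<in> vecs n" using ab(2) unfolding vecs_def by simp
  moreover have "phi ?x = v"
  proof -
    have "fa (?x i) = a i" "fb (?x i) = b i" for i
      using ab(1) fa_comb fb_comb by (simp_all add: K_def)
    thus ?thesis unfolding phi_def v by simp
  qed
  ultimately show ?thesis by metis
qed

lemma symp_phi: "symp n (phi x) (phi y) = \<theta> * (herm q n x y - (herm q n x y) ^ q)"
proof -
  have "symp n (phi x) (phi y) = (\<Sum>i<n. B (x i) (y i))"
    unfolding symp_def phi_def by (simp add: B_sympl)
  also have "\<dots> = \<theta> * (herm q n x y - (herm q n x y) ^ q)" by (rule B_sum)
  finally show ?thesis .
qed

lemma sweight_phi: "sweight n (phi x) = hweight n x"
proof -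
  have "{i. i < n \<and> (fst (phi x) i \<noteq> 0 \<or> snd (phi x) i \<noteq> 0)} = {i. i < n \<and> x i \<noteq> 0}"
    unfolding phi_def using fab_zero_iff by auto
  thus ?thesis unfolding sweight_def hweight_def by simp
qed

lemma phi_add: "((\<lambda>i. fst (phi x) i + fst (phi y) i), (\<lambda>i. snd (phi x) i + snd (phi y) i)) = phi (\<lambda>i. x i + y i)"
  unfolding phi_def by (simp add: fa_add fb_add)

lemma phi_smult: "a \<in> K \<Longrightarrow> ((\<lambda>i. a * fst (phi x) i), (\<lambda>i. a * snd (phi x) i)) = phi (\<lambda>i. a * x i)"
  unfolding phi_def by (simp add: fa_smult fb_smult K_def)

lemma dual_char:
  assumes lD: "linear_code n (D :: (nat \<Rightarrow> 'a) set)" and x: "x \<in> vecs n"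
  shows "(\<forall>y\<in>D. symp n (phi x) (phi y) = 0) \<longleftrightarrow> x \<in> herm_dual q n D"
proof
  assume A: "\<forall>y\<in>D. symp n (phi x) (phi y) = 0"
  show "x \<in> herm_dual q n D" unfolding herm_dual_def
  proof (simp add: x, intro ballI, rule ccontr)
    fix y assume y: "y \<in> D" and h: "herm q n x y \<noteq> 0"
    let ?h = "herm q n x y"
    let ?l = "(w0 / ?h) ^ q"
    have yD: "(\<lambda>i. ?l * y i) \<in> D" by (rule linear_code_smult[OF lD y])
    have "herm q n x (\<lambda>i. ?l * y i) = w0" unfolding herm_smult2 using h by (simp add: frob_frob)
    hence "symp n (phi x) (phi (\<lambda>i. ?l * y i)) = \<theta> * (w0 - w0 ^ q)" by (simp add: symp_phi)
    moreover have "symp n (phi x) (phi (\<lambda>i. ?l * y i)) = 0" using A yD by blast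
    ultimately show False using B_nonzero by simp
  qed
next
  assume "x \<in> herm_dual q n D"
  hence "herm q n x y = 0" if "y \<in> D" for y using that unfolding herm_dual_def by simp
  thus "\<forall>y\<in>D. symp n (phi x) (phi y) = 0" by (simp add: symp_phi frob_zero)
qed

lemma quenta_from:
  assumes lC: "linear_code n (C :: (nat \<Rightarrow> 'a) set)" and lD: "linear_code n (D :: (nat \<Rightarrow> 'a) set)"
    and dd: "herm_dual q n D = C"
    and cD: "card D = q ^ (2 * (n - k))"
    and cCD: "card (C \<inter> D) = q ^ (2 * I)"
    and Ik: "I \<le> k" and Ink: "I \<le> n - k" and kn: "k \<le> n"
    and cp: "code_params n k d C"
  shows "quenta_code K n (k - I) d (n - k - I)"
  unfolding quenta_code_def
proof (intro conjI exI[where x = "phi ` D"])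
  show "k - I + (n - k - I) \<le> n" using Ik Ink kn by linarith
  have DV: "D \<subseteq> vecs n" by (rule linear_code_vecs[OF lD])
  have CV: "C \<subseteq> vecs n" by (rule linear_code_vecs[OF lC])
  show "ssubspace K n (phi ` D)"
    unfolding ssubspace_def
  proof (intro conjI ballI)
    show "phi ` D \<subseteq> svecs K n" using DV phi_svecs by blast
    show "((\<lambda>_. 0), (\<lambda>_. 0)) \<in> phi ` D"
      by (rule image_eqI[where x = "\<lambda>_. 0"]) (simp_all add: phi_zero linear_code_zero[OF lD])
  next
    fix v w assume "v \<in> phi ` D" "w \<in> phi ` D"
    then obtain x y where xy: "x \<in> D" "y \<in> D" "v = phi x" "w = phi y" by blast
    have "(\<lambda>i. x i + y i) \<in> D" by (rule linear_code_add[OF lD xy(1,2)])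
    thus "((\<lambda>i. fst v i + fst w i), (\<lambda>i. snd v i + snd w i)) \<in> phi ` D"
      unfolding xy(3,4) phi_add by (rule imageI)
  next
    fix a v assume "a \<in> K" "v \<in> phi ` D"
    then obtain x where x: "x \<in> D" "v = phi x" by blast
    have "(\<lambda>i. a * x i) \<in> D" by (rule linear_code_smult[OF lD x(1)])
    thus "((\<lambda>i. a * fst v i), (\<lambda>i. a * snd v i)) \<in> phi ` D"
      unfolding x(2) phi_smult[OF \<open>a \<in> K\<close>] by (rule imageI)
  qed
  have cardS: "card (phi ` D) = card D" using phi_inj by (simp add: card_image inj_on_subset)
  have e1: "n - (k - I) + (n - k - I) = 2 * (n - k)" using Ik Ink kn by linarith
  show "card (phi ` D) = card K ^ (n - (k - I) + (n - k - I))"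
    unfolding cardS e1 card_K cD ..
  have SD: "symp_dual K n (phi ` D) = phi ` C"
  proof (intro equalityI subsetI)
    fix v assume v: "v \<in> symp_dual K n (phi ` D)"
    hence "v \<in> svecs K n" unfolding symp_dual_def by simp
    then obtain x where x: "x \<in> vecs n" "v = phi x" using svecs_phi by blast
    have "\<forall>y\<in>D. symp n (phi x) (phi y) = 0" using v x unfolding symp_dual_def by auto
    hence "x \<in> C" using dual_char[OF lD x(1)] dd by simp
    thus "v \<in> phi ` C" using x by simp
  next
    fix v assume "v \<in> phi ` C"
    then obtain x where x: "x \<in> C" "v = phi x" by blast
    have xV: "x \<in> vecs n" using x CV by auto
    have "x \<in> herm_dual q n D" using x dd by simp
    hence "\<forall>y\<in>D. symp n (phi x) (phi y) = 0" using dual_char[OF lD xV] by simp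
    thus "v \<in> symp_dual K n (phi ` D)" unfolding symp_dual_def using x phi_svecs[OF xV] by auto
  qed
  have e2: "n - (k - I) - (n - k - I) = 2 * I" using Ik Ink kn by linarith
  have "phi ` D \<inter> phi ` C = phi ` (C \<inter> D)" using phi_inj by (auto simp: image_Int)
  hence "card (phi ` D \<inter> phi ` C) = card (C \<inter> D)" using phi_inj by (simp add: card_image inj_on_subset)
  thus "card (phi ` D \<inter> symp_dual K n (phi ` D)) = card K ^ (n - (k - I) - (n - k - I))"
    unfolding SD e2 card_K cCD by simp
  obtain x where x: "x \<in> C" "x \<noteq> (\<lambda>_. 0)" "hweight n x = d" using cp unfolding code_params_def by blast
  show "\<exists>v\<in>symp_dual K n (phi ` D). v \<noteq> ((\<lambda>_. 0), (\<lambda>_. 0)) \<and> sweight n v = d"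
    unfolding SD using x phi_eq_zero sweight_phi by blast
  show "\<forall>v\<in>symp_dual K n (phi ` D). v \<noteq> ((\<lambda>_. 0), (\<lambda>_. 0)) \<longrightarrow> d \<le> sweight n v"
    unfolding SD using cp phi_eq_zero sweight_phi unfolding code_params_def by auto
qed

end

theorem mainTheorem7:
  fixes q n k d :: nat
    and C :: "(nat \<Rightarrow> 'a::{field,finite}) set"
    and emb :: "'a \<Rightarrow> 'b::field"
    and \<alpha> :: 'b
  assumes "prime_power q"
    and "card (UNIV :: 'a set) = q ^ 2"
    and "0 < n"
    and "coprime n q"
    and "cyclic_code n C"
    and "code_params n k d C"
    and "field_embedding emb"
    and "primitive_root_of_unity n \<alpha>"
  shows "quenta_code {x::'a. x ^ q = x} n
           (k - card (defining_set emb \<alpha> n (herm_dual q n C) \<inter> defining_set emb \<alpha> n C))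
           d
           (n - k - card (defining_set emb \<alpha> n (herm_dual q n C) \<inter> defining_set emb \<alpha> n C))"
proof -
  interpret fq q "TYPE('a)" using assms(1,2) by unfold_locales
  obtain \<theta> :: 'a where th: "\<theta> \<noteq> 0" "\<theta> ^ q = - \<theta>" using exists_theta by blast
  obtain w0 :: 'a where w0: "w0 ^ q \<noteq> w0" using exists_w0 by blast
  interpret F: fq2 q "TYPE('a)" \<theta> w0 by unfold_locales (simp_all add: th w0)
  define Q where "Q = card (UNIV :: 'a set)"
  have Q1: "Q > 1" unfolding Q_def by (rule card_UNIV_gt1)
  have lC: "linear_code n C" using assms(5) unfolding cyclic_code_def by simp
  define D where "D = herm_dual q n C"
  have cD: "cyclic_code n D" unfolding D_def by (rule herm_dual_cyclic[OF assms(3) assms(5)])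
  have lD: "linear_code n D" using cD unfolding cyclic_code_def by simp
  have h1: "card D * card C = Q ^ n" unfolding D_def Q_def by (rule herm_dual_card[OF lC])
  have h2: "card (herm_dual q n D) * card D = Q ^ n" unfolding Q_def by (rule herm_dual_card[OF lD])
  have sub: "C \<subseteq> herm_dual q n D"
  proof
    fix c assume c: "c \<in> C"
    have "herm q n c y = 0" if "y \<in> D" for y
    proof -
      have "herm q n y c = 0" using that c unfolding D_def herm_dual_def by simp
      thus ?thesis using herm_swap[where y=c and x=y] by (simp add: frob_zero)
    qed
    moreover have "c \<in> vecs n" using c linear_code_vecs[OF lC] by auto
    ultimately show "c \<in> herm_dual q n D" unfolding herm_dual_def by simp
  qed
  have finD: "finite D" by (rule linear_code_finite[OF lD])
  have D0: "card D > 0" using finD linear_code_zero[OF lD] card_gt_0_iff by blast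
  have "card (herm_dual q n D) * card D = card C * card D" using h1 h2 by (simp add: mult.commute)
  hence "card (herm_dual q n D) = card C" using D0 by simp
  hence dd: "herm_dual q n D = C"
    using sub linear_code_finite[OF herm_dual_linear[of n D]] by (intro card_subset_eq[symmetric]) auto
  have cC: "card C = Q ^ k" using assms(6) unfolding code_params_def Q_def by simp
  have kn: "k \<le> n"
  proof -
    have "card C \<le> card (vecs n :: (nat \<Rightarrow> 'a) set)"
      using linear_code_vecs[OF lC] finite_vecs by (rule card_mono[rotated])
    moreover have "card (vecs n :: (nat \<Rightarrow> 'a) set) = Q ^ n" unfolding Q_def by (rule card_vecs')
    ultimately have "Q ^ k \<le> Q ^ n" using cC by simp
    thus ?thesis by (rule power_le_imp_le_exp[OF Q1])
  qed
  have QnQk: "Q ^ n = Q ^ (n - k) * Q ^ k" using kn by (simp flip: power_add)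
  have cardD: "card D = Q ^ (n - k)"
  proof -
    have "card D * Q ^ k = Q ^ (n - k) * Q ^ k" using h1 cC QnQk by simp
    moreover have "Q ^ k > 0" using Q1 by simp
    ultimately show ?thesis using Q1 by simp
  qed
  define E where "E = sumset C D"
  have cE: "cyclic_code n E" unfolding E_def by (rule sumset_cyclic[OF assms(5) cD])
  interpret R: cycr n E emb \<alpha> by unfold_locales (simp_all add: assms cE)
  have mainE: "card E = Q ^ (n - card (defining_set emb \<alpha> n E)) \<and> card (defining_set emb \<alpha> n E) \<le> n"
    unfolding Q_def by (rule R.cyclic_main)
  have ZE: "defining_set emb \<alpha> n E = defining_set emb \<alpha> n C \<inter> defining_set emb \<alpha> n D"
    unfolding E_def by (rule sumset_ds[OF assms(7) lC lD])
  define I where "I = card (defining_set emb \<alpha> n (herm_dual q n C) \<inter> defining_set emb \<alpha> n C)"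
  have IE: "I = card (defining_set emb \<alpha> n E)" unfolding I_def ZE D_def by (simp add: Int_commute)
  have In: "I \<le> n" using mainE IE by simp
  have cardE: "card E = Q ^ (n - I)" using mainE IE by simp
  have cCD0: "card C * card D = card (C \<inter> D) * card E" unfolding E_def by (rule sumset_card[OF lC lD])
  have cCD: "card (C \<inter> D) = Q ^ I"
  proof -
    have "card (C \<inter> D) * Q ^ (n - I) = Q ^ I * Q ^ (n - I)"
      using cCD0 cC cardD cardE QnQk In by (simp add: mult.commute flip: power_add)
    moreover have "Q ^ (n - I) > 0" using Q1 by simp
    ultimately show ?thesis using Q1 by simp
  qed
  have finC: "finite C" by (rule linear_code_finite[OF lC])
  have Ik: "I \<le> k"
  proof -
    have "card (C \<inter> D) \<le> card C" using finC by (intro card_mono) auto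
    hence "Q ^ I \<le> Q ^ k" using cCD cC by simp
    thus ?thesis by (rule power_le_imp_le_exp[OF Q1])
  qed
  have Ink: "I \<le> n - k"
  proof -
    have "card (C \<inter> D) \<le> card D" using finD by (intro card_mono) auto
    hence "Q ^ I \<le> Q ^ (n - k)" using cCD cardD by simp
    thus ?thesis by (rule power_le_imp_le_exp[OF Q1])
  qed
  have cD': "card D = q ^ (2 * (n - k))" using cardD assms(2) Q_def by (simp add: power_mult)
  have cCD': "card (C \<inter> D) = q ^ (2 * I)" using cCD assms(2) Q_def by (simp add: power_mult)
  have "quenta_code K n (k - I) d (n - k - I)"
    by (rule F.quenta_from[OF lC lD dd cD' cCD' Ik Ink kn assms(6)])
  thus ?thesis unfolding I_def K_def .
qed


end
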